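(* Let $n\ge 2$ and $i\neq j$ in $\{1,\dots,n\}$. Let $H_{ij}$ be the space of $n\times n$ complex matrices that are zero outside the entries $(k,l)$ with $k\le i$ and $l\ge j$, i.e. $H_{ij}=\operatorname{span}\{E_{kl}: k\le i,\ l\ge j\}$. Let $w$ be the permutation matrix that has $e_n$ in column $j$, $e_1$ in column $i$, and the remaining vectors $e_{n-1},e_{n-2},\dots,e_2$ placed in decreasing order in the remaining columns (from left to right). Then $X_{H_{ij}}=Y_w$, where $X_{H_{ij}}=\{[g]\in GL_n(\mathbb{C})/B: g^{-1}E_{1n}g\in H_{ij}\}$.
   Context: $B$ is the group of invertible upper-triangular $n\times n$ complex matrices; $[g]\in GL_n(\mathbb{C})/B$ denotes the flag whose $k$-dimensional subspace is spanned by the first $k$ columns of $g$. $E_{kl}$ is the matrix unit with $1$ in entry $(k,l)$ and zeros elsewhere; $e_1,\dots,e_n$ is the standard basis of $\mathbb{C}^n$. For a permutation matrix $w$, the Schubert variety $Y_w$ is the closure of $\{[bw]: b\in B\}$. *)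

theory Defs
  imports "HOL-Analysis.Analysis"
begin

text \<open>Complex n x n matrices are represented as functions nat => nat => complex,
  with entries indexed by 1..n and all other entries zero. The topology on
  matrices is the (product) topology of nat => nat => complex, restricted to
  such functions; this is the Euclidean topology of C^(n*n).\<close>

type_synonym cmat = "nat \<Rightarrow> nat \<Rightarrow> complex"

definition is_mat :: "nat \<Rightarrow> cmat \<Rightarrow> bool" where
  "is_mat n A \<longleftrightarrow> (\<forall>k l. A k l \<noteq> 0 \<longrightarrow> k \<in> {1..n} \<and> l \<in> {1..n})"

definition mat_mult :: "nat \<Rightarrow> cmat \<Rightarrow> cmat \<Rightarrow> cmat" where
  "mat_mult n A C = (\<lambda>k l. if k \<in> {1..n} \<and> l \<in> {1..n} then (\<Sum>m=1..n. A k m * C m l) else 0)"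

definition idm :: "nat \<Rightarrow> cmat" where
  "idm n = (\<lambda>k l. if k = l \<and> k \<in> {1..n} then 1 else 0)"

definition GL :: "nat \<Rightarrow> cmat set" where
  "GL n = {g. is_mat n g \<and> (\<exists>h. is_mat n h \<and> mat_mult n g h = idm n \<and> mat_mult n h g = idm n)}"

definition minv :: "nat \<Rightarrow> cmat \<Rightarrow> cmat" where
  "minv n g = (THE h. is_mat n h \<and> mat_mult n g h = idm n \<and> mat_mult n h g = idm n)"

definition Borel :: "nat \<Rightarrow> cmat set" where
  "Borel n = {b \<in> GL n. \<forall>k l. l < k \<longrightarrow> b k l = 0}"

definition flag_of :: "nat \<Rightarrow> cmat \<Rightarrow> cmat set" where
  "flag_of n g = {mat_mult n g b | b. b \<in> Borel n}"

definition FlagVar :: "nat \<Rightarrow> cmat set set" where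
  "FlagVar n = flag_of n ` GL n"

definition flag_top :: "nat \<Rightarrow> cmat set topology" where
  "flag_top n = topology (\<lambda>U. U \<subseteq> FlagVar n \<and> openin (top_of_set (GL n)) (\<Union>U))"

definition Eunit :: "nat \<Rightarrow> nat \<Rightarrow> cmat" where
  "Eunit k l = (\<lambda>a b. if a = k \<and> b = l then 1 else 0)"

definition Hsp :: "nat \<Rightarrow> nat \<Rightarrow> nat \<Rightarrow> cmat set" where
  "Hsp n i j = {A. is_mat n A \<and> (\<forall>k l. A k l \<noteq> 0 \<longrightarrow> k \<le> i \<and> j \<le> l)}"

definition XH :: "nat \<Rightarrow> cmat set \<Rightarrow> cmat set set" where
  "XH n H = {flag_of n g | g. g \<in> GL n \<and> mat_mult n (minv n g) (mat_mult n (Eunit 1 n) g) \<in> H}"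

definition perm_mat :: "nat \<Rightarrow> (nat \<Rightarrow> nat) \<Rightarrow> cmat" where
  "perm_mat n \<sigma> = (\<lambda>k l. if l \<in> {1..n} \<and> k = \<sigma> l then 1 else 0)"

text \<open>sigma(j) = n, sigma(i) = 1, the remaining columns (left to right) get
  n-1, n-2, ..., 2: the r-th remaining column gets n - r.\<close>
definition w_sigma :: "nat \<Rightarrow> nat \<Rightarrow> nat \<Rightarrow> nat \<Rightarrow> nat" where
  "w_sigma n i j c = (if c = j then n else if c = i then 1
     else n - card {c' \<in> {1..c}. c' \<noteq> i \<and> c' \<noteq> j})"

definition w_ij :: "nat \<Rightarrow> nat \<Rightarrow> nat \<Rightarrow> cmat" where
  "w_ij n i j = perm_mat n (w_sigma n i j)"

definition Schubert :: "nat \<Rightarrow> cmat \<Rightarrow> cmat set set" where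
  "Schubert n w = (flag_top n) closure_of {flag_of n (mat_mult n b w) | b. b \<in> Borel n}"

end

theory Submission
  imports Defs "Jordan_Normal_Form.Determinant"
begin

declare One_nat_def[simp del]

lemma sum_Suc_shift: "(\<Sum>m=1..n. f m) = (\<Sum>m<n. f (Suc m) :: 'a::comm_monoid_add)"
proof -
  have "(\<Sum>m<n. f (Suc m)) = sum f (Suc ` {..<n})" by (simp add: sum.reindex)
  also have "Suc ` {..<n} = {1..n}"
    by (simp only: lessThan_atLeast0 image_Suc_atLeastLessThan atLeastLessThanSuc_atLeastAtMost One_nat_def)
  finally show ?thesis by simp
qed

lemma sum_single:
  assumes "finite A" "l \<in> A" "\<And>m. m \<in> A \<Longrightarrow> m \<noteq> l \<Longrightarrow> f m = 0"
  shows "sum f A = f l"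
proof -
  have "sum f A = f l + sum f (A - {l})" using assms by (simp add: sum.remove)
  also have "sum f (A - {l}) = 0" using assms by (intro sum.neutral) auto
  finally show ?thesis by simp
qed

lemma mm_apply: "k \<in> {1..n} \<Longrightarrow> l \<in> {1..n} \<Longrightarrow> mat_mult n A C k l = (\<Sum>m=1..n. A k m * C m l)"
  by (simp add: mat_mult_def)

lemma mm_out: "\<not> (k \<in> {1..n} \<and> l \<in> {1..n}) \<Longrightarrow> mat_mult n A C k l = 0"
  unfolding mat_mult_def by auto

lemma is_mat_mm[simp]: "is_mat n (mat_mult n A C)"
  by (auto simp: is_mat_def mat_mult_def)

lemma is_matD: "is_mat n A \<Longrightarrow> \<not> (k \<in> {1..n} \<and> l \<in> {1..n}) \<Longrightarrow> A k l = 0"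
  by (auto simp: is_mat_def)

lemma mm_assoc: "mat_mult n (mat_mult n A B) C = mat_mult n A (mat_mult n B C)"
proof (intro ext)
  fix k l
  show "mat_mult n (mat_mult n A B) C k l = mat_mult n A (mat_mult n B C) k l"
  proof (cases "k \<in> {1..n} \<and> l \<in> {1..n}")
    case True
    have "mat_mult n (mat_mult n A B) C k l = (\<Sum>m=1..n. (\<Sum>p=1..n. A k p * B p m) * C m l)"
      using True by (auto simp: mat_mult_def intro!: sum.cong)
    also have "\<dots> = (\<Sum>p=1..n. A k p * (\<Sum>m=1..n. B p m * C m l))"
      by (simp add: sum_distrib_left sum_distrib_right mult.assoc) (rule sum.swap)
    also have "\<dots> = mat_mult n A (mat_mult n B C) k l"
      using True by (auto simp: mat_mult_def intro!: sum.cong)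
    finally show ?thesis .
  next
    case False then show ?thesis by (simp add: mm_out)
  qed
qed

lemma is_mat_idm[simp]: "is_mat n (idm n)"
  by (auto simp: is_mat_def idm_def)

lemma mm_idm_right: "is_mat n A \<Longrightarrow> mat_mult n A (idm n) = A"
proof (intro ext)
  fix k l assume A: "is_mat n A"
  show "mat_mult n A (idm n) k l = A k l"
  proof (cases "k \<in> {1..n} \<and> l \<in> {1..n}")
    case True
    then show ?thesis by (simp add: mat_mult_def idm_def if_distrib[where f="\<lambda>x. _ * x"] sum.delta' cong: if_cong)
  qed (use A in \<open>auto simp: mat_mult_def is_mat_def\<close>)
qed

lemma mm_idm_left: "is_mat n A \<Longrightarrow> mat_mult n (idm n) A = A"
proof (intro ext)
  fix k l assume A: "is_mat n A"
  show "mat_mult n (idm n) A k l = A k l"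
  proof (cases "k \<in> {1..n} \<and> l \<in> {1..n}")
    case True
    then show ?thesis by (simp add: mat_mult_def idm_def if_distrib[where f="\<lambda>x. x * _"] sum.delta cong: if_cong)
  qed (use A in \<open>auto simp: mat_mult_def is_mat_def\<close>)
qed

lemma inv_unique:
  assumes "is_mat n h" "is_mat n h'" "mat_mult n h g = idm n" "mat_mult n g h' = idm n"
  shows "h = h'"
proof -
  have "h = mat_mult n h (mat_mult n g h')" using assms by (simp add: mm_idm_right)
  also have "\<dots> = mat_mult n (mat_mult n h g) h'" by (simp add: mm_assoc)
  also have "\<dots> = h'" using assms by (simp add: mm_idm_left)
  finally show ?thesis .
qed

lemma GL_D: assumes "g \<in> GL n"
  shows "is_mat n g" "is_mat n (minv n g)" "mat_mult n g (minv n g) = idm n" "mat_mult n (minv n g) g = idm n"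
proof -
  obtain h where h: "is_mat n h" "mat_mult n g h = idm n" "mat_mult n h g = idm n"
    using assms by (auto simp: GL_def)
  have "minv n g = h" unfolding minv_def
    by (rule the_equality) (use h inv_unique in auto)
  then show "is_mat n (minv n g)" "mat_mult n g (minv n g) = idm n" "mat_mult n (minv n g) g = idm n"
    using h by auto
  show "is_mat n g" using assms by (simp add: GL_def)
qed

lemma minv_eq: assumes "g \<in> GL n" "is_mat n h" "mat_mult n g h = idm n" shows "minv n g = h"
  using inv_unique[of n "minv n g" h g] GL_D[OF assms(1)] assms by auto

lemma GL_I: "is_mat n g \<Longrightarrow> is_mat n h \<Longrightarrow> mat_mult n g h = idm n \<Longrightarrow> mat_mult n h g = idm n \<Longrightarrow> g \<in> GL n"
  by (auto simp: GL_def)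

lemma idm_GL[simp]: "idm n \<in> GL n"
  by (rule GL_I[where h="idm n"]) (auto simp: mm_idm_left)

lemma GL_mm: assumes "g \<in> GL n" "h \<in> GL n"
  shows "mat_mult n g h \<in> GL n" "minv n (mat_mult n g h) = mat_mult n (minv n h) (minv n g)"
proof -
  note G = GL_D[OF assms(1)] and H = GL_D[OF assms(2)]
  have 1: "mat_mult n (mat_mult n g h) (mat_mult n (minv n h) (minv n g)) = idm n"
    by (simp add: mm_assoc, simp add: mm_assoc[symmetric] H G mm_idm_left mm_idm_right)
  have 2: "mat_mult n (mat_mult n (minv n h) (minv n g)) (mat_mult n g h) = idm n"
    by (simp add: mm_assoc, simp add: mm_assoc[symmetric] H G mm_idm_left mm_idm_right)
  show "mat_mult n g h \<in> GL n" using 1 2 by (intro GL_I) auto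
  then show "minv n (mat_mult n g h) = mat_mult n (minv n h) (minv n g)"
    using 1 by (intro minv_eq) auto
qed

lemma GL_minv: assumes "g \<in> GL n" shows "minv n g \<in> GL n" "minv n (minv n g) = g"
proof -
  note G = GL_D[OF assms]
  show "minv n g \<in> GL n" using G by (intro GL_I[where h=g]) auto
  then show "minv n (minv n g) = g" using G by (intro minv_eq) auto
qed

definition ev :: "nat \<Rightarrow> nat \<Rightarrow> complex" where "ev m = (\<lambda>a. if a = m then 1 else 0)"
definition dotp :: "nat \<Rightarrow> (nat \<Rightarrow> complex) \<Rightarrow> (nat \<Rightarrow> complex) \<Rightarrow> complex" where
  "dotp n x v = (\<Sum>c=1..n. x c * v c)"
definition rk1 :: "nat \<Rightarrow> (nat \<Rightarrow> complex) \<Rightarrow> (nat \<Rightarrow> complex) \<Rightarrow> cmat" where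
  "rk1 n v x = (\<lambda>a b. if a \<in> {1..n} \<and> b \<in> {1..n} then idm n a b + v a * x b else 0)"

lemma is_mat_rk1[simp]: "is_mat n (rk1 n v x)"
  by (auto simp: is_mat_def rk1_def)

lemma sum_idm_right: "a \<in> {1..n} \<Longrightarrow> (\<Sum>m=1..n. f m * idm n m a) = f a"
  using sum_single[of "{1..n}" a "\<lambda>m. f m * idm n m a"] by (auto simp: idm_def)

lemma sum_idm_left: "a \<in> {1..n} \<Longrightarrow> (\<Sum>m=1..n. idm n a m * f m) = f a"
  using sum_single[of "{1..n}" a "\<lambda>m. idm n a m * f m"] by (auto simp: idm_def)

lemma rk1_right:
  assumes "a \<in> {1..n}" "b \<in> {1..n}"
  shows "mat_mult n g (rk1 n v x) a b = g a b + (\<Sum>c=1..n. g a c * v c) * x b"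
proof -
  have "mat_mult n g (rk1 n v x) a b = (\<Sum>m=1..n. g a m * idm n m b + g a m * v m * x b)"
    using assms by (auto simp: mm_apply rk1_def algebra_simps intro!: sum.cong)
  also have "\<dots> = g a b + (\<Sum>c=1..n. g a c * v c) * x b"
    using assms by (simp add: sum.distrib sum_idm_right sum_distrib_right)
  finally show ?thesis .
qed

lemma rk1_left:
  assumes "a \<in> {1..n}" "b \<in> {1..n}"
  shows "mat_mult n (rk1 n v x) g a b = g a b + v a * (\<Sum>c=1..n. x c * g c b)"
proof -
  have "mat_mult n (rk1 n v x) g a b = (\<Sum>m=1..n. idm n a m * g m b + v a * (x m * g m b))"
    using assms by (auto simp: mm_apply rk1_def algebra_simps intro!: sum.cong)
  also have "\<dots> = g a b + v a * (\<Sum>c=1..n. x c * g c b)"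
    using assms by (simp add: sum.distrib sum_idm_left sum_distrib_left)
  finally show ?thesis .
qed

lemma rk1_inv:
  assumes d: "1 + dotp n x v \<noteq> 0" and s: "s = -1 / (1 + dotp n x v)"
  shows "mat_mult n (rk1 n v x) (rk1 n (\<lambda>a. s * v a) x) = idm n"
        "mat_mult n (rk1 n (\<lambda>a. s * v a) x) (rk1 n v x) = idm n"
proof -
  have s1: "s * (1 + dotp n x v) = -1" using d s by simp
  show "mat_mult n (rk1 n v x) (rk1 n (\<lambda>a. s * v a) x) = idm n"
  proof (intro ext)
    fix a b
    show "mat_mult n (rk1 n v x) (rk1 n (\<lambda>a. s * v a) x) a b = idm n a b"
    proof (cases "a \<in> {1..n} \<and> b \<in> {1..n}")
      case True
      have "(\<Sum>c=1..n. rk1 n v x a c * (s * v c)) = (\<Sum>c=1..n. idm n a c * (s * v c) + v a * s * (x c * v c))"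
        using True by (auto simp: rk1_def algebra_simps intro!: sum.cong)
      also have "\<dots> = (\<Sum>c=1..n. idm n a c * (s * v c)) + (\<Sum>c=1..n. v a * s * (x c * v c))"
        by (rule sum.distrib)
      also have "\<dots> = s * v a + v a * s * dotp n x v"
        using True by (simp only: sum_idm_left dotp_def sum_distrib_left)
      also have "\<dots> = s * v a * (1 + dotp n x v)" by (simp add: algebra_simps)
      finally have e: "(\<Sum>c=1..n. rk1 n v x a c * (s * v c)) = - v a"
        using s1 by (metis mult.commute mult.left_commute mult_minus1_right)
      have "mat_mult n (rk1 n v x) (rk1 n (\<lambda>a. s * v a) x) a b = rk1 n v x a b + (\<Sum>c=1..n. rk1 n v x a c * (s * v c)) * x b"
        using True by (intro rk1_right) auto
      then show ?thesis unfolding e using True by (simp add: rk1_def)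
    qed (auto simp: mm_out idm_def)
  qed
  show "mat_mult n (rk1 n (\<lambda>a. s * v a) x) (rk1 n v x) = idm n"
  proof (intro ext)
    fix a b
    show "mat_mult n (rk1 n (\<lambda>a. s * v a) x) (rk1 n v x) a b = idm n a b"
    proof (cases "a \<in> {1..n} \<and> b \<in> {1..n}")
      case True
      have "(\<Sum>c=1..n. rk1 n (\<lambda>a. s * v a) x a c * v c) = (\<Sum>c=1..n. idm n a c * v c + s * v a * (x c * v c))"
        using True by (auto simp: rk1_def algebra_simps intro!: sum.cong)
      also have "\<dots> = (\<Sum>c=1..n. idm n a c * v c) + (\<Sum>c=1..n. s * v a * (x c * v c))"
        by (rule sum.distrib)
      also have "\<dots> = v a + s * v a * dotp n x v"
        using True by (simp only: sum_idm_left dotp_def sum_distrib_left)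
      also have "\<dots> = v a * (1 + s * dotp n x v)" by (simp add: algebra_simps)
      finally have e: "(\<Sum>c=1..n. rk1 n (\<lambda>a. s * v a) x a c * v c) = v a * (1 + s * dotp n x v)" .
      have "1 + s * dotp n x v = (s * (1 + dotp n x v)) + 1 - s" by (simp add: algebra_simps)
      also have "\<dots> = - s" using s1 by simp
      finally have h: "1 + s * dotp n x v = - s" .
      have "mat_mult n (rk1 n (\<lambda>a. s * v a) x) (rk1 n v x) a b = rk1 n (\<lambda>a. s * v a) x a b + (\<Sum>c=1..n. rk1 n (\<lambda>a. s * v a) x a c * v c) * x b"
        using True by (intro rk1_right) auto
      also have "\<dots> = idm n a b + s * v a * x b + v a * (1 + s * dotp n x v) * x b"
        unfolding e using True by (simp add: rk1_def)
      also have "\<dots> = idm n a b" unfolding h by (simp add: algebra_simps)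
      finally show ?thesis .
    qed (auto simp: mm_out idm_def)
  qed
qed

lemma rk1_GL:
  assumes "1 + dotp n x v \<noteq> 0"
  shows "rk1 n v x \<in> GL n" "minv n (rk1 n v x) = rk1 n (\<lambda>a. (-1 / (1 + dotp n x v)) * v a) x"
proof -
  note I = rk1_inv[OF assms refl]
  show G: "rk1 n v x \<in> GL n" by (rule GL_I[OF is_mat_rk1 is_mat_rk1 I])
  show "minv n (rk1 n v x) = rk1 n (\<lambda>a. (-1 / (1 + dotp n x v)) * v a) x"
    by (rule minv_eq[OF G is_mat_rk1 I(1)])
qed

lemma rk1_zero[simp]: "rk1 n (\<lambda>a. 0) x = idm n"
  by (auto simp: rk1_def idm_def fun_eq_iff)

lemma Borel_I: "g \<in> GL n \<Longrightarrow> (\<And>k l. l < k \<Longrightarrow> g k l = 0) \<Longrightarrow> g \<in> Borel n"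
  by (auto simp: Borel_def)

lemma Borel_D: "b \<in> Borel n \<Longrightarrow> b \<in> GL n" "b \<in> Borel n \<Longrightarrow> l < k \<Longrightarrow> b k l = 0"
  by (auto simp: Borel_def)

lemma rk1_Borel:
  assumes "1 + dotp n x v \<noteq> 0" "\<And>a b. a \<in> {1..n} \<Longrightarrow> b \<in> {1..n} \<Longrightarrow> b < a \<Longrightarrow> v a * x b = 0"
  shows "rk1 n v x \<in> Borel n"
proof (rule Borel_I[OF rk1_GL(1)[OF assms(1)]])
  fix k l :: nat assume "l < k"
  then show "rk1 n v x k l = 0" using assms(2)[of k l] by (auto simp: rk1_def idm_def)
qed

lemma idm_Borel[simp]: "idm n \<in> Borel n"
  by (intro Borel_I idm_GL) (auto simp: idm_def)

lemma Borel_mm: assumes "b \<in> Borel n" "b' \<in> Borel n" shows "mat_mult n b b' \<in> Borel n"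
proof (intro Borel_I)
  show "mat_mult n b b' \<in> GL n" using assms by (auto intro: GL_mm dest: Borel_D)
  fix k l :: nat assume kl: "l < k"
  show "mat_mult n b b' k l = 0"
  proof (cases "k \<in> {1..n} \<and> l \<in> {1..n}")
    case True
    have "(\<Sum>m=1..n. b k m * b' m l) = 0"
    proof (intro sum.neutral ballI)
      fix m show "b k m * b' m l = 0"
        using Borel_D(2)[OF assms(1), of m k] Borel_D(2)[OF assms(2), of l m] kl by (cases "m < k") auto
    qed
    then show ?thesis using True by (simp add: mm_apply)
  next
    case False then show ?thesis by (simp add: mm_out)
  qed
qed

definition Jm :: "nat \<Rightarrow> cmat \<Rightarrow> complex mat" where
  "Jm n A = mat n n (\<lambda>(a,b). A (Suc a) (Suc b))"

lemma Jm_carrier[simp]: "Jm n A \<in> carrier_mat n n"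
  by (simp add: Jm_def)

lemma Jm_mult: "Jm n (mat_mult n A C) = Jm n A * Jm n C"
proof (rule eq_matI)
  fix a b assume ab: "a < dim_row (Jm n A * Jm n C)" "b < dim_col (Jm n A * Jm n C)"
  then have ab': "a < n" "b < n" by (auto simp: Jm_def)
  have "Jm n (mat_mult n A C) $$ (a, b) = (\<Sum>m=1..n. A (Suc a) m * C m (Suc b))"
    using ab' by (simp add: Jm_def mm_apply)
  also have "\<dots> = (\<Sum>m<n. A (Suc a) (Suc m) * C (Suc m) (Suc b))" by (rule sum_Suc_shift)
  also have "\<dots> = (Jm n A * Jm n C) $$ (a, b)"
    using ab' by (simp add: Jm_def scalar_prod_def atLeast0LessThan)
  finally show "Jm n (mat_mult n A C) $$ (a, b) = (Jm n A * Jm n C) $$ (a, b)" .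
qed (auto simp: Jm_def)

lemma Jm_idm: "Jm n (idm n) = 1\<^sub>m n"
  by (rule eq_matI) (auto simp: Jm_def idm_def)

lemma det_GL: assumes "g \<in> GL n" shows "det (Jm n g) \<noteq> 0"
proof -
  note G = GL_D[OF assms]
  have "det (Jm n g) * det (Jm n (minv n g)) = det (Jm n (mat_mult n g (minv n g)))"
    by (simp add: Jm_mult det_mult[of _ n])
  also have "\<dots> = 1" using G by (simp add: Jm_idm)
  finally show ?thesis by auto
qed

lemma det_zero_block:
  assumes R: "R \<subseteq> {1..n}" and C: "C \<subseteq> {1..n}" and card: "n < card R + card C"
    and z: "\<And>a b. a \<in> R \<Longrightarrow> b \<in> C \<Longrightarrow> g a b = 0"
  shows "det (Jm n g) = 0"
proof -
  define R' where "R' = Suc -` R"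
  define C' where "C' = Suc -` C"
  have rs: "X \<subseteq> range Suc" if "X \<subseteq> {1..n}" for X
  proof
    fix x assume "x \<in> X"
    then have "x = Suc (x - 1)" using that by auto
    then show "x \<in> range Suc" by (rule range_eqI)
  qed
  have cR: "card R' = card R" unfolding R'_def
    using rs[OF R] by (intro card_vimage_inj) auto
  have cC: "card C' = card C" unfolding C'_def
    using rs[OF C] by (intro card_vimage_inj) auto
  have R'sub: "R' \<subseteq> {0..<n}" "C' \<subseteq> {0..<n}" using R C by (auto simp: R'_def C'_def)
  have "(\<Sum>p\<in>{p. p permutes {0..<n}}. signof p * (\<Prod>a=0..<n. Jm n g $$ (a, p a))) = 0"
  proof (intro sum.neutral ballI)
    fix p assume "p \<in> {p. p permutes {0..<n}}"
    then have p: "p permutes {0..<n}" by simp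
    have "\<exists>a\<in>R'. p a \<in> C'"
    proof (rule ccontr)
      assume "\<not> ?thesis"
      then have disj: "p ` R' \<inter> C' = {}" by auto
      have cp: "card (p ` R') = card R'"
        by (rule card_image[OF inj_on_subset[OF permutes_inj[OF p] subset_UNIV]])
      have pR: "p ` R' \<subseteq> {0..<n}" using R'sub p by (auto simp: permutes_in_image)
      have f1: "finite (p ` R')" using pR finite_subset by blast
      have f2: "finite C'" using R'sub finite_subset by blast
      have "card (p ` R' \<union> C') = card (p ` R') + card C'"
        by (rule card_Un_disjoint[OF f1 f2 disj])
      then have "card (p ` R' \<union> C') = card R + card C" using cp cR cC by simp
      moreover have "card (p ` R' \<union> C') \<le> card {0..<n}"
        by (rule card_mono) (use pR R'sub in auto)
      ultimately show False using card by simp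
    qed
    then obtain a where a: "a \<in> R'" "p a \<in> C'" by blast
    have "a < n" "p a < n" using a R'sub by auto
    then have "Jm n g $$ (a, p a) = 0" using a z by (simp add: Jm_def R'_def C'_def)
    then have "(\<Prod>a=0..<n. Jm n g $$ (a, p a)) = 0" using \<open>a < n\<close> by (intro prod_zero) auto
    then show "signof p * (\<Prod>a=0..<n. Jm n g $$ (a, p a)) = 0" by simp
  qed
  then show ?thesis by (simp add: det_def'[OF Jm_carrier])
qed

lemma GL_no_zero_block:
  assumes "g \<in> GL n" "R \<subseteq> {1..n}" "C \<subseteq> {1..n}" "n < card R + card C"
  shows "\<exists>a\<in>R. \<exists>b\<in>C. g a b \<noteq> 0"
  using det_zero_block[OF assms(2-4), of g] det_GL[OF assms(1)] by blast

lemma Borel_diag: assumes "b \<in> Borel n" "c \<in> {1..n}" shows "b c c \<noteq> 0"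
proof
  assume z: "b c c = 0"
  have "\<exists>a\<in>{c..n}. \<exists>l\<in>{1..c}. b a l \<noteq> 0"
    using assms by (intro GL_no_zero_block) (auto dest: Borel_D)
  then obtain a l where "a \<in> {c..n}" "l \<in> {1..c}" "b a l \<noteq> 0" by blast
  moreover have "l < a \<or> (l = c \<and> a = c)" using calculation by auto
  ultimately show False
  proof (cases "l < a")
    case True then show False using Borel_D(2)[OF assms(1) True] \<open>b a l \<noteq> 0\<close> by simp
  next
    case False then show False using \<open>l < a \<or> (l = c \<and> a = c)\<close> z \<open>b a l \<noteq> 0\<close> by simp
  qed
qed

lemma Borel_minv: assumes b: "b \<in> Borel n" shows "minv n b \<in> Borel n"
proof (intro Borel_I)
  have bG: "b \<in> GL n" using b by (rule Borel_D)
  show "minv n b \<in> GL n" using bG by (rule GL_minv)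
  note G = GL_D[OF bG]
  have main: "\<forall>a. l < a \<longrightarrow> minv n b a l = 0" for l
  proof (induction l rule: less_induct)
    case (less l)
    show ?case
    proof (intro allI impI)
      fix a assume la: "l < a"
      show "minv n b a l = 0"
      proof (cases "a \<in> {1..n} \<and> l \<in> {1..n}")
        case True
        have "0 = mat_mult n (minv n b) b a l" using G la True by (simp add: idm_def)
        also have "\<dots> = (\<Sum>m=1..n. minv n b a m * b m l)" using True by (simp add: mm_apply)
        also have "\<dots> = minv n b a l * b l l"
        proof (rule sum_single)
          fix m assume m: "m \<in> {1..n}" "m \<noteq> l"
          show "minv n b a m * b m l = 0"
          proof (cases "m < l")
            case True then show ?thesis using less.IH[of m] la by auto
          next
            case False then show ?thesis using m Borel_D(2)[OF b, of l m] by auto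
          qed
        qed (use True in auto)
        finally show ?thesis using Borel_diag[OF b, of l] True by simp
      qed (use is_matD[OF G(2)] in blast)
    qed
  qed
  fix k l :: nat assume "l < k" then show "minv n b k l = 0" using main by blast
qed

lemma cont_entry: "continuous_on UNIV (\<lambda>g::cmat. g a b)"
  using continuous_on_product_then_coordinatewise[OF continuous_on_product_coordinates[of a], of b] .

lemma cont_cmat: "(\<And>a b. continuous_on S (\<lambda>x. F x a b)) \<Longrightarrow> continuous_on S (F :: _ \<Rightarrow> cmat)"
  by (intro continuous_on_coordinatewise_then_product) auto

lemma cont_mm_right: "continuous_on UNIV (\<lambda>g. mat_mult n g P)"
proof (rule cont_cmat)
  fix a b
  show "continuous_on UNIV (\<lambda>g. mat_mult n g P a b)"
  proof (cases "a \<in> {1..n} \<and> b \<in> {1..n}")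
    case True
    then show ?thesis by (simp add: mm_apply) (intro continuous_intros cont_entry)
  qed (simp add: mm_out)
qed

lemma cont_mm_left: "continuous_on UNIV (\<lambda>g. mat_mult n P g)"
proof (rule cont_cmat)
  fix a b
  show "continuous_on UNIV (\<lambda>g. mat_mult n P g a b)"
  proof (cases "a \<in> {1..n} \<and> b \<in> {1..n}")
    case True
    then show ?thesis by (simp add: mm_apply) (intro continuous_intros cont_entry)
  qed (simp add: mm_out)
qed

lemma cont_pert: "continuous_on UNIV (\<lambda>t::real. mat_mult n g (rk1 n (\<lambda>a. complex_of_real t * v a) x))"
proof (rule cont_cmat)
  fix a b
  show "continuous_on UNIV (\<lambda>t::real. mat_mult n g (rk1 n (\<lambda>a. complex_of_real t * v a) x) a b)"
  proof (cases "a \<in> {1..n} \<and> b \<in> {1..n}")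
    case True
    have "continuous_on UNIV (\<lambda>t::real. \<Sum>m=1..n. g a m * (idm n m b + complex_of_real t * v m * x b))"
      by (intro continuous_intros)
    moreover have "mat_mult n g (rk1 n (\<lambda>a. complex_of_real t * v a) x) a b =
       (\<Sum>m=1..n. g a m * (idm n m b + complex_of_real t * v m * x b))" for t
      using True by (auto simp: mm_apply rk1_def intro!: sum.cong)
    ultimately show ?thesis by simp
  qed (simp add: mm_out)
qed

definition Sset :: "nat \<Rightarrow> cmat \<Rightarrow> cmat set" where
  "Sset n w = {g \<in> GL n. \<forall>W. openin (top_of_set (GL n)) W \<longrightarrow> g \<in> W \<longrightarrow>
      (\<exists>b\<in>Borel n. \<exists>b'\<in>Borel n. mat_mult n (mat_mult n b w) b' \<in> W)}"

lemma Sset_GL: "g \<in> Sset n w \<Longrightarrow> g \<in> GL n"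
  by (simp add: Sset_def)

lemma Sset_BwB: "w \<in> GL n \<Longrightarrow> b \<in> Borel n \<Longrightarrow> b' \<in> Borel n \<Longrightarrow> mat_mult n (mat_mult n b w) b' \<in> Sset n w"
  unfolding Sset_def by (auto intro!: GL_mm dest: Borel_D)

lemma Sset_right:
  assumes g: "g \<in> Sset n w" and b: "b \<in> Borel n"
  shows "mat_mult n g b \<in> Sset n w"
  unfolding Sset_def
proof (intro CollectI conjI allI impI)
  have gG: "g \<in> GL n" using g by (simp add: Sset_def)
  have bG: "b \<in> GL n" using b by (rule Borel_D)
  show "mat_mult n g b \<in> GL n" using gG bG by (rule GL_mm)
  fix W assume W: "openin (top_of_set (GL n)) W" and gb: "mat_mult n g b \<in> W"
  obtain U where U: "open U" "W = GL n \<inter> U" using W by (auto simp: openin_open)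
  have "openin (top_of_set (GL n)) (GL n \<inter> (\<lambda>h. mat_mult n h b) -` U)"
    by (rule continuous_openin_preimage_gen[OF continuous_on_subset[OF cont_mm_right] U(1)]) auto
  moreover have "g \<in> GL n \<inter> (\<lambda>h. mat_mult n h b) -` U" using gG gb U by auto
  ultimately obtain b1 b2 where b12: "b1 \<in> Borel n" "b2 \<in> Borel n"
    "mat_mult n (mat_mult n b1 w) b2 \<in> GL n \<inter> (\<lambda>h. mat_mult n h b) -` U"
    using g unfolding Sset_def by blast
  then have "mat_mult n (mat_mult n b1 w) (mat_mult n b2 b) \<in> U" by (simp add: mm_assoc)
  moreover have "mat_mult n (mat_mult n b1 w) (mat_mult n b2 b) \<in> GL n"
    using b12 bG by (auto intro!: GL_mm dest: Borel_D simp: mm_assoc[symmetric])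
  ultimately show "\<exists>b\<in>Borel n. \<exists>b'\<in>Borel n. mat_mult n (mat_mult n b w) b' \<in> W"
    using b12 b U by (auto intro!: Borel_mm)
qed

lemma Sset_left:
  assumes g: "g \<in> Sset n w" and b: "b \<in> Borel n" and w: "w \<in> GL n"
  shows "mat_mult n b g \<in> Sset n w"
  unfolding Sset_def
proof (intro CollectI conjI allI impI)
  have gG: "g \<in> GL n" using g by (simp add: Sset_def)
  have bG: "b \<in> GL n" using b by (rule Borel_D)
  show "mat_mult n b g \<in> GL n" using bG gG by (rule GL_mm)
  fix W assume W: "openin (top_of_set (GL n)) W" and gb: "mat_mult n b g \<in> W"
  obtain U where U: "open U" "W = GL n \<inter> U" using W by (auto simp: openin_open)
  have "openin (top_of_set (GL n)) (GL n \<inter> (\<lambda>h. mat_mult n b h) -` U)"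
    by (rule continuous_openin_preimage_gen[OF continuous_on_subset[OF cont_mm_left] U(1)]) auto
  moreover have "g \<in> GL n \<inter> (\<lambda>h. mat_mult n b h) -` U" using gG gb U by auto
  ultimately obtain b1 b2 where b12: "b1 \<in> Borel n" "b2 \<in> Borel n"
    "mat_mult n (mat_mult n b1 w) b2 \<in> GL n \<inter> (\<lambda>h. mat_mult n b h) -` U"
    using g unfolding Sset_def by blast
  then have "mat_mult n (mat_mult n (mat_mult n b b1) w) b2 \<in> U" by (simp add: mm_assoc)
  moreover have "mat_mult n (mat_mult n (mat_mult n b b1) w) b2 \<in> GL n"
    using b12 bG w by (auto intro!: GL_mm dest: Borel_D)
  ultimately show "\<exists>b\<in>Borel n. \<exists>b'\<in>Borel n. mat_mult n (mat_mult n b w) b' \<in> W"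
    using b12 b U by (auto intro!: Borel_mm)
qed

lemma Sset_right_back:
  assumes "mat_mult n g b \<in> Sset n w" "b \<in> Borel n" "g \<in> GL n"
  shows "g \<in> Sset n w"
proof -
  have "mat_mult n (mat_mult n g b) (minv n b) \<in> Sset n w"
    by (rule Sset_right[OF assms(1) Borel_minv[OF assms(2)]])
  moreover have "mat_mult n (mat_mult n g b) (minv n b) = g"
    using GL_D[OF Borel_D(1)[OF assms(2)]] GL_D[OF assms(3)] by (simp add: mm_assoc mm_idm_right)
  ultimately show ?thesis by simp
qed

lemma Sset_left_back:
  assumes "mat_mult n b g \<in> Sset n w" "b \<in> Borel n" "g \<in> GL n" "w \<in> GL n"
  shows "g \<in> Sset n w"
proof -
  have "mat_mult n (minv n b) (mat_mult n b g) \<in> Sset n w"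
    by (rule Sset_left[OF assms(1) Borel_minv[OF assms(2)] assms(4)])
  moreover have "mat_mult n (minv n b) (mat_mult n b g) = g"
    using GL_D[OF Borel_D(1)[OF assms(2)]] GL_D[OF assms(3)] by (simp add: mm_assoc[symmetric] mm_idm_left)
  ultimately show ?thesis by simp
qed

lemma Sset_lim:
  assumes g: "g \<in> GL n" and c: "continuous_on UNIV (\<Phi> :: real \<Rightarrow> cmat)" and p0: "\<Phi> 0 = g"
    and S: "\<And>t. t \<noteq> 0 \<Longrightarrow> \<Phi> t \<in> Sset n w"
  shows "g \<in> Sset n w"
  unfolding Sset_def
proof (intro CollectI conjI allI impI g)
  fix W assume W: "openin (top_of_set (GL n)) W" and gW: "g \<in> W"
  obtain U where U: "open U" "W = GL n \<inter> U" using W by (auto simp: openin_open)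
  have "open (\<Phi> -` U)" using c U(1) by (simp add: continuous_on_open_vimage)
  moreover have "0 \<in> \<Phi> -` U" using p0 gW U by auto
  ultimately obtain e where e: "e > 0" "ball 0 e \<subseteq> \<Phi> -` U" by (meson open_contains_ball)
  have "e / 2 \<in> ball 0 e" using e by auto
  then have "\<Phi> (e/2) \<in> U" using e(2) by blast
  moreover have "\<Phi> (e/2) \<in> Sset n w" using S e by auto
  ultimately have "\<Phi> (e/2) \<in> W" using U by (auto simp: Sset_def)
  then show "\<exists>b\<in>Borel n. \<exists>b'\<in>Borel n. mat_mult n (mat_mult n b w) b' \<in> W"
    using \<open>\<Phi> (e/2) \<in> Sset n w\<close> W by (auto simp: Sset_def)
qed

lemma Sset_pert:
  assumes g: "g \<in> GL n" and S: "\<And>t::real. t \<noteq> 0 \<Longrightarrow> mat_mult n g (rk1 n (\<lambda>a. complex_of_real t * v a) x) \<in> Sset n w"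
  shows "g \<in> Sset n w"
proof (rule Sset_lim[OF g cont_pert])
  show "mat_mult n g (rk1 n (\<lambda>a. complex_of_real 0 * v a) x) = g"
    using mm_idm_right[OF GL_D(1)[OF g]] by simp
qed (rule S)

lemma Eg_apply:
  assumes "m \<in> {1..n}" "b \<in> {1..n}"
  shows "mat_mult n (Eunit 1 n) g m b = (if m = 1 then g n b else 0)"
proof -
  have "mat_mult n (Eunit 1 n) g m b = (\<Sum>p=1..n. Eunit 1 n m p * g p b)" using assms by (simp add: mm_apply)
  also have "\<dots> = Eunit 1 n m n * g n b"
    by (rule sum_single) (use assms in \<open>auto simp: Eunit_def\<close>)
  also have "\<dots> = (if m = 1 then g n b else 0)" by (simp add: Eunit_def)
  finally show ?thesis .
qed

lemma XE_apply:
  assumes "a \<in> {1..n}" "b \<in> {1..n}"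
  shows "mat_mult n (minv n g) (mat_mult n (Eunit 1 n) g) a b = minv n g a 1 * g n b"
proof -
  have n1: "1 \<in> {1..n}" using assms by auto
  have "mat_mult n (minv n g) (mat_mult n (Eunit 1 n) g) a b = (\<Sum>m=1..n. minv n g a m * mat_mult n (Eunit 1 n) g m b)"
    using assms by (rule mm_apply)
  also have "\<dots> = (\<Sum>m=1..n. minv n g a m * (if m = 1 then g n b else 0))"
    by (rule sum.cong[OF refl]) (use assms in \<open>simp add: Eg_apply\<close>)
  also have "\<dots> = minv n g a 1 * (if (1::nat) = 1 then g n b else 0)"
    by (rule sum_single) (use n1 in auto)
  finally show ?thesis by simp
qed

lemma u_nz: assumes "g \<in> GL n" "n \<ge> 1" shows "\<exists>a\<in>{1..n}. minv n g a 1 \<noteq> 0"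
proof (rule ccontr)
  assume "\<not> ?thesis"
  then have "(\<Sum>m=1..n. g 1 m * minv n g m 1) = 0" by (intro sum.neutral) auto
  moreover have "mat_mult n g (minv n g) 1 1 = 1" using GL_D[OF assms(1)] assms(2) by (simp add: idm_def)
  ultimately show False using assms(2) by (simp add: mm_apply)
qed

lemma r_nz: assumes "g \<in> GL n" "n \<ge> 1" shows "\<exists>b\<in>{1..n}. g n b \<noteq> 0"
proof (rule ccontr)
  assume "\<not> ?thesis"
  then have "(\<Sum>m=1..n. g n m * minv n g m n) = 0" by (intro sum.neutral) auto
  moreover have "mat_mult n g (minv n g) n n = 1" using GL_D[OF assms(1)] assms(2) by (simp add: idm_def)
  ultimately show False using assms(2) by (simp add: mm_apply)
qed

definition condX :: "nat \<Rightarrow> nat \<Rightarrow> nat \<Rightarrow> cmat \<Rightarrow> bool" where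
  "condX n i j g \<longleftrightarrow> (\<forall>a. i < a \<and> a \<le> n \<longrightarrow> minv n g a 1 = 0) \<and> (\<forall>l. 1 \<le> l \<and> l < j \<longrightarrow> g n l = 0)"

lemma col_e1_minv:
  assumes g: "g \<in> GL n" and i: "i \<in> {1..n}" and col: "\<And>a. a \<in> {1..n} \<Longrightarrow> a \<noteq> 1 \<Longrightarrow> g a i = 0"
    and a: "a \<in> {1..n}" "a \<noteq> i"
  shows "minv n g a 1 = 0"
proof -
  have key: "minv n g c 1 * g 1 i = idm n c i" if c: "c \<in> {1..n}" for c
  proof -
    have "idm n c i = mat_mult n (minv n g) g c i" using GL_D[OF g] by simp
    also have "\<dots> = (\<Sum>m=1..n. minv n g c m * g m i)" using c i by (simp add: mm_apply)
    also have "\<dots> = minv n g c 1 * g 1 i"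
      by (rule sum_single) (use col i in auto)
    finally show ?thesis by simp
  qed
  have "g 1 i \<noteq> 0" using key[OF i] i by (auto simp: idm_def)
  then show ?thesis using key[OF a(1)] a by (simp add: idm_def)
qed

lemma cramer_minv:
  assumes g: "g \<in> GL n" and k: "k \<in> {1..n}"
  shows "det (replace_col (Jm n g) (unit_vec n 0) (k - 1)) = minv n g k 1 * det (Jm n g)"
proof -
  define x where "x = vec n (\<lambda>a. minv n g (Suc a) 1)"
  have x: "x \<in> carrier_vec n" by (simp add: x_def)
  have "Jm n g *\<^sub>v x = unit_vec n 0"
  proof (rule eq_vecI)
    fix a assume "a < dim_vec (unit_vec n 0)"
    then have a: "a < n" by simp
    have "(Jm n g *\<^sub>v x) $ a = (\<Sum>b<n. g (Suc a) (Suc b) * minv n g (Suc b) 1)"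
      using a by (simp add: Jm_def x_def scalar_prod_def atLeast0LessThan)
    also have "\<dots> = (\<Sum>m=1..n. g (Suc a) m * minv n g m 1)" by (rule sum_Suc_shift[symmetric])
    also have "\<dots> = mat_mult n g (minv n g) (Suc a) 1" using a by (simp add: mm_apply)
    also have "\<dots> = (if a = 0 then 1 else 0)" using GL_D[OF g] a by (simp add: idm_def)
    also have "\<dots> = unit_vec n 0 $ a" using a by simp
    finally show "(Jm n g *\<^sub>v x) $ a = unit_vec n 0 $ a" .
  qed (simp add: Jm_def)
  then have "det (replace_col (Jm n g) (unit_vec n 0) (k - 1)) = x $ (k - 1) * det (Jm n g)"
    using cramer_lemma_mat[OF Jm_carrier x, of "k - 1" g] k by auto
  also have "x $ (k - 1) = minv n g k 1"
  proof -
    have "k - 1 < n" "Suc (k - 1) = k" using k by auto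
    then show ?thesis unfolding x_def by simp
  qed
  finally show ?thesis .
qed

lemma cont_det:
  assumes "\<And>a b. continuous_on UNIV (\<lambda>g. F g a b)"
  shows "continuous_on UNIV (\<lambda>g::cmat. det (mat m m (\<lambda>(a,b). F g a b)) :: complex)"
proof -
  have eq: "det (mat m m (\<lambda>(a,b). F g a b)) =
     (\<Sum>p\<in>{p. p permutes {0..<m}}. signof p * (\<Prod>a=0..<m. F g a (p a)))" for g
  proof -
    have "det (mat m m (\<lambda>(a,b). F g a b)) =
      (\<Sum>p\<in>{p. p permutes {0..<m}}. signof p * (\<Prod>a=0..<m. mat m m (\<lambda>(a,b). F g a b) $$ (a, p a)))"
      by (rule det_def') simp
    also have "\<dots> = (\<Sum>p\<in>{p. p permutes {0..<m}}. signof p * (\<Prod>a=0..<m. F g a (p a)))"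
    proof (rule sum.cong[OF refl])
      fix p assume "p \<in> {p. p permutes {0..<m}}"
      then have p: "p permutes {0..<m}" by simp
      have "(\<Prod>a=0..<m. mat m m (\<lambda>(a,b). F g a b) $$ (a, p a)) = (\<Prod>a=0..<m. F g a (p a))"
      proof (rule prod.cong[OF refl])
        fix a assume "a \<in> {0..<m}"
        then have "a < m" "p a < m" using permutes_in_image[OF p] by auto
        then show "mat m m (\<lambda>(a,b). F g a b) $$ (a, p a) = F g a (p a)" by simp
      qed
      then show "signof p * (\<Prod>a=0..<m. mat m m (\<lambda>(a,b). F g a b) $$ (a, p a)) = signof p * (\<Prod>a=0..<m. F g a (p a))"
        by simp
    qed
    finally show ?thesis .
  qed
  show ?thesis unfolding eq by (intro continuous_intros assms)
qed

definition Dk :: "nat \<Rightarrow> cmat \<Rightarrow> nat \<Rightarrow> complex" where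
  "Dk n g k = det (replace_col (Jm n g) (unit_vec n 0) (k - 1))"

lemma cont_Dk: assumes "n \<ge> 1" shows "continuous_on UNIV (\<lambda>g. Dk n g k)"
proof -
  have eq: "replace_col (Jm n g) (unit_vec n 0) (k - 1) =
    mat n n (\<lambda>(a,b). if b = k - 1 then (if a = 0 then 1 else 0) else g (Suc a) (Suc b))" for g
    by (rule eq_matI) (use assms in \<open>auto simp: replace_col_def Jm_def\<close>)
  have c: "continuous_on UNIV (\<lambda>g::cmat. if b = k - 1 then (if a = 0 then 1 else 0) else g (Suc a) (Suc b) :: complex)" for a b
    by (cases "b = k - 1") (auto simp: cont_entry)
  show ?thesis unfolding Dk_def eq by (rule cont_det[OF c])
qed

lemma sum_ev_right: "m \<in> {1..n} \<Longrightarrow> (\<Sum>c=1..n. f c * ev m c) = f m"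
  using sum_single[of "{1..n}" m "\<lambda>c. f c * ev m c"] by (auto simp: ev_def)

lemma sum_ev_left: "m \<in> {1..n} \<Longrightarrow> (\<Sum>c=1..n. ev m c * f c) = f m"
  using sum_single[of "{1..n}" m "\<lambda>c. ev m c * f c"] by (auto simp: ev_def)

lemma dotp_ev: "m \<in> {1..n} \<Longrightarrow> dotp n (ev m) v = v m"
  by (simp add: dotp_def sum_ev_left)

lemma dotp_ev2: "m \<in> {1..n} \<Longrightarrow> dotp n x (\<lambda>a. s * ev m a) = s * x m"
proof -
  assume m: "m \<in> {1..n}"
  have "dotp n x (\<lambda>a. s * ev m a) = (\<Sum>c=1..n. (s * x c) * ev m c)" by (simp add: dotp_def algebra_simps)
  also have "\<dots> = s * x m" using m by (rule sum_ev_right)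
  finally show ?thesis .
qed

lemma pert_entry:
  assumes g: "is_mat n g" and m: "m \<in> {1..n}" and x: "\<And>b. b \<notin> {1..n} \<Longrightarrow> x b = 0"
  shows "mat_mult n g (rk1 n (\<lambda>a. s * ev m a) x) a b = g a b + s * g a m * x b"
proof (cases "a \<in> {1..n} \<and> b \<in> {1..n}")
  case True
  have "(\<Sum>c=1..n. g a c * (s * ev m c)) = (\<Sum>c=1..n. (s * g a c) * ev m c)" by (simp add: algebra_simps)
  also have "\<dots> = s * g a m" using m by (rule sum_ev_right)
  finally show ?thesis using True by (simp add: rk1_right)
next
  case False
  then have "g a b = 0" "g a m * x b = 0" using is_matD[OF g] x by auto
  then show ?thesis using False by (simp add: mm_out)
qed

lemma minv_pert:
  assumes g: "g \<in> GL n" and d: "dotp n x v = 0" and a: "a \<in> {1..n}"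
  shows "minv n (mat_mult n g (rk1 n v x)) a 1 = minv n g a 1 - v a * (\<Sum>c=1..n. x c * minv n g c 1)"
proof -
  have d1: "1 + dotp n x v \<noteq> 0" using d by simp
  have "minv n (mat_mult n g (rk1 n v x)) = mat_mult n (minv n (rk1 n v x)) (minv n g)"
    by (rule GL_mm(2)[OF g rk1_GL(1)[OF d1]])
  also have "minv n (rk1 n v x) = rk1 n (\<lambda>a. -1 * v a) x" using rk1_GL(2)[OF d1] d by simp
  finally have "minv n (mat_mult n g (rk1 n v x)) a 1 = mat_mult n (rk1 n (\<lambda>a. -1 * v a) x) (minv n g) a 1"
    by simp
  also have "\<dots> = minv n g a 1 + (-1 * v a) * (\<Sum>c=1..n. x c * minv n g c 1)"
    using a by (intro rk1_left) auto
  finally show ?thesis by simp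
qed

lemma flag_mem: "g \<in> GL n \<Longrightarrow> g \<in> flag_of n g"
  unfolding flag_of_def using mm_idm_right[OF GL_D(1)] idm_Borel by (metis (mono_tags, lifting) mem_Collect_eq)

lemma flag_sub: "g \<in> GL n \<Longrightarrow> flag_of n g \<subseteq> GL n"
  unfolding flag_of_def by (auto intro: GL_mm dest: Borel_D)

lemma flag_right:
  assumes g: "g \<in> GL n" and b: "b \<in> Borel n"
  shows "flag_of n (mat_mult n g b) = flag_of n g"
proof
  show "flag_of n (mat_mult n g b) \<subseteq> flag_of n g"
    unfolding flag_of_def using b by (auto simp: mm_assoc intro!: Borel_mm)
  show "flag_of n g \<subseteq> flag_of n (mat_mult n g b)"
  proof
    fix h assume "h \<in> flag_of n g"
    then obtain b' where b': "b' \<in> Borel n" "h = mat_mult n g b'" by (auto simp: flag_of_def)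
    have "mat_mult n (mat_mult n g b) (mat_mult n (minv n b) b') = mat_mult n g b'"
      using GL_D[OF Borel_D(1)[OF b]] GL_D[OF Borel_D(1)[OF b'(1)]]
      by (simp add: mm_assoc[symmetric]) (simp add: mm_assoc mm_idm_left)
    moreover have "mat_mult n (minv n b) b' \<in> Borel n" using b b' by (intro Borel_mm Borel_minv)
    ultimately have "\<exists>c. h = mat_mult n (mat_mult n g b) c \<and> c \<in> Borel n" using b'(2) by metis
    then show "h \<in> flag_of n (mat_mult n g b)" unfolding flag_of_def by blast
  qed
qed

lemma flag_eq:
  assumes g: "g \<in> GL n" and h: "h \<in> flag_of n g"
  shows "flag_of n h = flag_of n g" "h \<in> GL n"
proof -
  obtain b where b: "b \<in> Borel n" "h = mat_mult n g b" using h by (auto simp: flag_of_def)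
  then show "flag_of n h = flag_of n g" using flag_right[OF g b(1)] by simp
  show "h \<in> GL n" using flag_sub[OF g] h by blast
qed

lemma istop_flag: "istopology (\<lambda>U. U \<subseteq> FlagVar n \<and> openin (top_of_set (GL n)) (\<Union>U))"
  unfolding istopology_def
proof (rule conjI; intro allI impI)
  fix U V assume U: "U \<subseteq> FlagVar n \<and> openin (top_of_set (GL n)) (\<Union>U)"
    and V: "V \<subseteq> FlagVar n \<and> openin (top_of_set (GL n)) (\<Union>V)"
  have "\<Union>(U \<inter> V) = \<Union>U \<inter> \<Union>V"
  proof
    show "\<Union>(U \<inter> V) \<subseteq> \<Union>U \<inter> \<Union>V" by blast
    show "\<Union>U \<inter> \<Union>V \<subseteq> \<Union>(U \<inter> V)"
    proof
      fix h assume "h \<in> \<Union>U \<inter> \<Union>V"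
      then obtain x y where xy: "x \<in> U" "y \<in> V" "h \<in> x" "h \<in> y" by blast
      obtain g1 where g1: "g1 \<in> GL n" "x = flag_of n g1" using xy U by (auto simp: FlagVar_def)
      obtain g2 where g2: "g2 \<in> GL n" "y = flag_of n g2" using xy V by (auto simp: FlagVar_def)
      have "x = y" using flag_eq(1)[OF g1(1)] flag_eq(1)[OF g2(1)] xy g1 g2 by metis
      then show "h \<in> \<Union>(U \<inter> V)" using xy by blast
    qed
  qed
  then show "U \<inter> V \<subseteq> FlagVar n \<and> openin (top_of_set (GL n)) (\<Union>(U \<inter> V))"
    using U V by auto
next
  fix K assume K: "\<forall>U\<in>K. U \<subseteq> FlagVar n \<and> openin (top_of_set (GL n)) (\<Union>U)"
  have "\<Union>(\<Union>K) = \<Union>(Union ` K)" by blast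
  moreover have "openin (top_of_set (GL n)) (\<Union>(Union ` K))" using K by (intro openin_Union) auto
  ultimately show "\<Union>K \<subseteq> FlagVar n \<and> openin (top_of_set (GL n)) (\<Union>(\<Union>K))" using K by auto
qed

lemma openin_flag: "openin (flag_top n) U \<longleftrightarrow> U \<subseteq> FlagVar n \<and> openin (top_of_set (GL n)) (\<Union>U)"
  unfolding flag_top_def using topology_inverse'[OF istop_flag] by simp

lemma union_FlagVar: "\<Union>(FlagVar n) = GL n"
  unfolding FlagVar_def using flag_sub flag_mem by blast

lemma topspace_flag: "topspace (flag_top n) = FlagVar n"
proof
  show "topspace (flag_top n) \<subseteq> FlagVar n" unfolding topspace_def openin_flag by blast
  have "openin (flag_top n) (FlagVar n)" unfolding openin_flag union_FlagVar by simp
  then show "FlagVar n \<subseteq> topspace (flag_top n)" by (rule openin_subset)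
qed

locale flg =
  fixes n i j :: nat
  assumes n2: "n \<ge> 2" and iI: "i \<in> {1..n}" and jI: "j \<in> {1..n}" and ij: "i \<noteq> j"
begin

abbreviation "\<sigma> \<equiv> w_sigma n i j"
abbreviation "w \<equiv> w_ij n i j"
definition cnt :: "nat \<Rightarrow> nat" where "cnt c = card {c' \<in> {1..c}. c' \<noteq> i \<and> c' \<noteq> j}"
definition rem :: "nat \<Rightarrow> bool" where "rem c \<longleftrightarrow> c \<in> {1..n} \<and> c \<noteq> i \<and> c \<noteq> j"

lemma sig_i[simp]: "\<sigma> i = 1" using ij by (simp add: w_sigma_def)
lemma sig_j[simp]: "\<sigma> j = n" by (simp add: w_sigma_def)
lemma sig_rem: "rem c \<Longrightarrow> \<sigma> c = n - cnt c"
  by (simp add: w_sigma_def rem_def cnt_def)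

lemma cnt_ge1: "rem c \<Longrightarrow> cnt c \<ge> 1"
proof -
  assume r: "rem c"
  have "card {c} \<le> card {c' \<in> {1..c}. c' \<noteq> i \<and> c' \<noteq> j}"
    using r by (intro card_mono) (auto simp: rem_def)
  then show ?thesis by (simp add: cnt_def)
qed

lemma cnt_le: "rem c \<Longrightarrow> cnt c \<le> n - 2"
proof -
  assume r: "rem c"
  have "{c' \<in> {1..c}. c' \<noteq> i \<and> c' \<noteq> j} \<subseteq> {1..n} - {i, j}" using r by (auto simp: rem_def)
  then have "cnt c \<le> card ({1..n} - {i, j})" unfolding cnt_def by (intro card_mono) auto
  also have "card ({1..n} - {i, j}) = card {1..n} - card {i, j}"
    using iI jI by (intro card_Diff_subset) auto
  also have "\<dots> = n - 2" using ij by simp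
  finally show ?thesis .
qed

lemma cnt_mono: "rem c \<Longrightarrow> rem c' \<Longrightarrow> c < c' \<Longrightarrow> cnt c < cnt c'"
proof -
  assume r: "rem c" "rem c'" "c < c'"
  let ?A = "{x \<in> {1..c}. x \<noteq> i \<and> x \<noteq> j}" and ?B = "{x \<in> {1..c'}. x \<noteq> i \<and> x \<noteq> j}"
  have "?A \<subseteq> ?B" using r by auto
  moreover have "c' \<in> ?B" "c' \<notin> ?A" using r by (auto simp: rem_def)
  ultimately have "?A \<subset> ?B" by blast
  then have "card ?A < card ?B" by (rule psubset_card_mono[rotated]) simp
  then show ?thesis by (simp add: cnt_def)
qed

lemma sig_rem_range: "rem c \<Longrightarrow> 1 < \<sigma> c \<and> \<sigma> c < n"
  using cnt_ge1[of c] cnt_le[of c] sig_rem[of c] n2 by auto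

lemma sig_dec: "rem c \<Longrightarrow> rem c' \<Longrightarrow> c < c' \<Longrightarrow> \<sigma> c' < \<sigma> c"
  using cnt_mono[of c c'] cnt_le[of c'] sig_rem[of c] sig_rem[of c'] n2 by auto

lemma sig_range: "c \<in> {1..n} \<Longrightarrow> \<sigma> c \<in> {1..n}"
  using sig_rem_range[of c] n2 ij iI jI by (cases "c = i \<or> c = j") (auto simp: rem_def)

lemma sig_eq_n: "c \<in> {1..n} \<Longrightarrow> \<sigma> c = n \<longleftrightarrow> c = j"
  using sig_rem_range[of c] n2 ij by (cases "c = i \<or> c = j") (auto simp: rem_def)

lemma sig_eq_1: "c \<in> {1..n} \<Longrightarrow> \<sigma> c = 1 \<longleftrightarrow> c = i"
  using sig_rem_range[of c] n2 ij by (cases "c = i \<or> c = j") (auto simp: rem_def)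

lemma sig_inj: "inj_on \<sigma> {1..n}"
proof (rule inj_onI)
  fix c c' assume c: "c \<in> {1..n}" "c' \<in> {1..n}" "\<sigma> c = \<sigma> c'"
  show "c = c'"
  proof (rule ccontr)
    assume ne: "c \<noteq> c'"
    show False
    proof (cases "rem c \<and> rem c'")
      case True
      show False
      proof (cases "c < c'")
        case True' : True
        show False using sig_dec[of c c'] True True' c(3) by simp
      next
        case False
        then have "c' < c" using ne by simp
        then show False using sig_dec[of c' c] True c(3) by simp
      qed
    next
      case False
      then have "c = i \<or> c = j \<or> c' = i \<or> c' = j" using c by (auto simp: rem_def)
      then show False using c ne sig_eq_n[OF c(1)] sig_eq_n[OF c(2)] sig_eq_1[OF c(1)] sig_eq_1[OF c(2)] by auto
    qed
  qed
qed

lemma sig_surj: "\<sigma> ` {1..n} = {1..n}"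
proof (rule endo_inj_surj[OF finite_atLeastAtMost _ sig_inj])
  show "\<sigma> ` {1..n} \<subseteq> {1..n}" using sig_range by blast
qed

lemma sig_onto: "a \<in> {1..n} \<Longrightarrow> \<exists>c\<in>{1..n}. \<sigma> c = a"
proof -
  assume "a \<in> {1..n}"
  then have "a \<in> \<sigma> ` {1..n}" using sig_surj by simp
  then show ?thesis by (auto simp: image_iff)
qed

lemma card_sig_img: "k \<le> n \<Longrightarrow> card (\<sigma> ` {1..k}) = k"
proof -
  assume k: "k \<le> n"
  have "inj_on \<sigma> {1..k}" by (rule inj_on_subset[OF sig_inj]) (use k in auto)
  then show ?thesis by (simp add: card_image)
qed

lemma w_apply: "w a l = (if l \<in> {1..n} \<and> a = \<sigma> l then 1 else 0)"
  by (simp add: w_ij_def perm_mat_def)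

lemma is_mat_w: "is_mat n w"
  unfolding is_mat_def
proof (intro allI impI)
  fix k l assume "w k l \<noteq> 0"
  then have "l \<in> {1..n}" "k = \<sigma> l" by (auto simp: w_apply split: if_splits)
  then show "k \<in> {1..n} \<and> l \<in> {1..n}" using sig_range by blast
qed

definition wT :: cmat where "wT = (\<lambda>a l. w l a)"

lemma is_mat_wT: "is_mat n wT"
  unfolding is_mat_def
proof (intro allI impI)
  fix k l assume "wT k l \<noteq> 0"
  then have "w l k \<noteq> 0" by (simp add: wT_def)
  then show "k \<in> {1..n} \<and> l \<in> {1..n}" using is_mat_w by (auto simp: is_mat_def)
qed

lemma mm_w: "a \<in> {1..n} \<Longrightarrow> l \<in> {1..n} \<Longrightarrow> mat_mult n g w a l = g a (\<sigma> l)"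
proof -
  assume a: "a \<in> {1..n}" and l: "l \<in> {1..n}"
  have "mat_mult n g w a l = (\<Sum>m=1..n. g a m * w m l)" using a l by (simp add: mm_apply)
  also have "\<dots> = g a (\<sigma> l) * w (\<sigma> l) l"
    by (rule sum_single) (use sig_range[OF l] in \<open>auto simp: w_apply\<close>)
  also have "\<dots> = g a (\<sigma> l)" using l by (simp add: w_apply)
  finally show ?thesis .
qed

lemma mm_wT: "a \<in> {1..n} \<Longrightarrow> c \<in> {1..n} \<Longrightarrow> mat_mult n g wT a (\<sigma> c) = g a c"
proof -
  assume a: "a \<in> {1..n}" and c: "c \<in> {1..n}"
  have "mat_mult n g wT a (\<sigma> c) = (\<Sum>m=1..n. g a m * w (\<sigma> c) m)"
    using a c sig_range by (simp add: mm_apply wT_def)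
  also have "\<dots> = g a c * w (\<sigma> c) c"
  proof (rule sum_single)
    fix m assume "m \<in> {1..n}" "m \<noteq> c"
    then have "\<sigma> c \<noteq> \<sigma> m" using inj_onD[OF sig_inj, of c m] c by auto
    then show "g a m * w (\<sigma> c) m = 0" by (simp add: w_apply)
  qed (use c in auto)
  also have "\<dots> = g a c" using c by (simp add: w_apply)
  finally show ?thesis .
qed

lemma w_GL: "w \<in> GL n" "minv n w = wT"
proof -
  have 1: "mat_mult n w wT = idm n"
  proof (intro ext)
    fix a b
    show "mat_mult n w wT a b = idm n a b"
    proof (cases "a \<in> {1..n} \<and> b \<in> {1..n}")
      case True
      then obtain c where c: "c \<in> {1..n}" "\<sigma> c = b" using sig_onto by blast
      show ?thesis using mm_wT[of a c w] True c by (auto simp: w_apply idm_def)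
    next
      case False then show ?thesis by (auto simp: mm_out idm_def)
    qed
  qed
  have 2: "mat_mult n wT w = idm n"
  proof (intro ext)
    fix a b
    show "mat_mult n wT w a b = idm n a b"
    proof (cases "a \<in> {1..n} \<and> b \<in> {1..n}")
      case True
      have e: "\<sigma> b = \<sigma> a \<longleftrightarrow> a = b" using inj_onD[OF sig_inj, of a b] True by auto
      have "mat_mult n wT w a b = wT a (\<sigma> b)" using True by (intro mm_w) auto
      also have "\<dots> = idm n a b" using True e by (auto simp: wT_def w_apply idm_def)
      finally show ?thesis .
    next
      case False then show ?thesis by (auto simp: mm_out idm_def)
    qed
  qed
  show "w \<in> GL n" using 1 2 is_mat_w is_mat_wT by (intro GL_I) auto
  then show "minv n w = wT" using 1 is_mat_wT by (intro minv_eq) auto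
qed

lemma n1: "n \<ge> 1" using n2 by simp
lemma oneI: "1 \<in> {1..n}" using n2 by simp
lemma nI: "n \<in> {1..n}" using n2 by simp

lemma Xt_iff:
  assumes g: "g \<in> GL n"
  shows "mat_mult n (minv n g) (mat_mult n (Eunit 1 n) g) \<in> Hsp n i j \<longleftrightarrow> condX n i j g"
proof
  let ?X = "mat_mult n (minv n g) (mat_mult n (Eunit 1 n) g)"
  assume "?X \<in> Hsp n i j"
  then have H: "\<And>k l. ?X k l \<noteq> 0 \<Longrightarrow> k \<le> i \<and> j \<le> l" by (auto simp: Hsp_def)
  show "condX n i j g" unfolding condX_def
  proof (intro conjI allI impI)
    fix a assume a: "i < a \<and> a \<le> n"
    show "minv n g a 1 = 0"
    proof (rule ccontr)
      assume u: "minv n g a 1 \<noteq> 0"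
      obtain b where b: "b \<in> {1..n}" "g n b \<noteq> 0" using r_nz[OF g n1] by blast
      have aI: "a \<in> {1..n}" using a iI by auto
      have "?X a b \<noteq> 0" using XE_apply[OF aI b(1)] u b by simp
      then show False using H a by fastforce
    qed
  next
    fix l assume l: "1 \<le> l \<and> l < j"
    show "g n l = 0"
    proof (rule ccontr)
      assume r: "g n l \<noteq> 0"
      obtain a where a: "a \<in> {1..n}" "minv n g a 1 \<noteq> 0" using u_nz[OF g n1] by blast
      have lI: "l \<in> {1..n}" using l jI by auto
      have "?X a l \<noteq> 0" using XE_apply[OF a(1) lI] a r by simp
      then show False using H l by fastforce
    qed
  qed
next
  let ?X = "mat_mult n (minv n g) (mat_mult n (Eunit 1 n) g)"
  assume C: "condX n i j g"
  have "?X k l = 0" if nz: "\<not> (k \<le> i \<and> j \<le> l)" for k l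
  proof (cases "k \<in> {1..n} \<and> l \<in> {1..n}")
    case True
    have "minv n g k 1 * g n l = 0"
    proof (cases "k \<le> i")
      case True then have "\<not> j \<le> l" using nz by simp
      then show ?thesis using C \<open>k \<in> {1..n} \<and> l \<in> {1..n}\<close> by (auto simp: condX_def)
    next
      case False then show ?thesis using C \<open>k \<in> {1..n} \<and> l \<in> {1..n}\<close> by (auto simp: condX_def)
    qed
    then show ?thesis using True by (simp add: XE_apply)
  qed (simp add: mm_out)
  then show "?X \<in> Hsp n i j" unfolding Hsp_def by auto
qed

lemma condX_right_B:
  assumes g: "g \<in> GL n" and b: "b \<in> Borel n" and C: "condX n i j g"
  shows "condX n i j (mat_mult n g b)"
  unfolding condX_def
proof (intro conjI allI impI)
  have bG: "b \<in> GL n" using b by (rule Borel_D)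
  fix a assume a: "i < a \<and> a \<le> n"
  have aI: "a \<in> {1..n}" using a iI by auto
  have "minv n (mat_mult n g b) a 1 = mat_mult n (minv n b) (minv n g) a 1" using GL_mm(2)[OF g bG] by simp
  also have "\<dots> = (\<Sum>m=1..n. minv n b a m * minv n g m 1)" using aI oneI by (simp add: mm_apply)
  also have "\<dots> = 0"
  proof (rule sum.neutral, rule ballI)
    fix m assume m: "m \<in> {1..n}"
    show "minv n b a m * minv n g m 1 = 0"
    proof (cases "m < a")
      case True then show ?thesis using Borel_D(2)[OF Borel_minv[OF b] True] by simp
    next
      case False then have "minv n g m 1 = 0" using C a m by (auto simp: condX_def)
      then show ?thesis by simp
    qed
  qed
  finally show "minv n (mat_mult n g b) a 1 = 0" .
next
  fix l assume l: "1 \<le> l \<and> l < j"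
  have lI: "l \<in> {1..n}" using l jI by auto
  have "mat_mult n g b n l = (\<Sum>m=1..n. g n m * b m l)" using lI nI by (simp add: mm_apply)
  also have "\<dots> = 0"
  proof (rule sum.neutral, rule ballI)
    fix m assume m: "m \<in> {1..n}"
    show "g n m * b m l = 0"
    proof (cases "l < m")
      case True then show ?thesis using Borel_D(2)[OF b True] by simp
    next
      case False then have "g n m = 0" using C l m by (auto simp: condX_def)
      then show ?thesis by simp
    qed
  qed
  finally show "mat_mult n g b n l = 0" .
qed

lemma condX_B_iff:
  assumes g: "g \<in> GL n" and b: "b \<in> Borel n"
  shows "condX n i j (mat_mult n g b) \<longleftrightarrow> condX n i j g"
proof
  assume C: "condX n i j (mat_mult n g b)"
  have gb: "mat_mult n g b \<in> GL n" using g Borel_D(1)[OF b] by (rule GL_mm)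
  have "condX n i j (mat_mult n (mat_mult n g b) (minv n b))"
    by (rule condX_right_B[OF gb Borel_minv[OF b] C])
  moreover have "mat_mult n (mat_mult n g b) (minv n b) = g"
    using GL_D[OF Borel_D(1)[OF b]] GL_D[OF g] by (simp add: mm_assoc mm_idm_right)
  ultimately show "condX n i j g" by simp
qed (rule condX_right_B[OF g b])

lemma bw_GL: "b \<in> Borel n \<Longrightarrow> mat_mult n b w \<in> GL n"
  using GL_mm(1)[OF Borel_D(1) w_GL(1)] by blast

lemma bw_cond: assumes b: "b \<in> Borel n" shows "condX n i j (mat_mult n b w)"
  unfolding condX_def
proof (intro conjI allI impI)
  have col: "mat_mult n b w a i = 0" if "a \<in> {1..n}" "a \<noteq> 1" for a
  proof -
    have "mat_mult n b w a i = b a 1" using mm_w[OF that(1) iI] by simp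
    also have "\<dots> = 0" using Borel_D(2)[OF b] that by simp
    finally show ?thesis .
  qed
  fix a assume a: "i < a \<and> a \<le> n"
  then show "minv n (mat_mult n b w) a 1 = 0"
    using col_e1_minv[OF bw_GL[OF b] iI col] iI by auto
next
  fix l assume l: "1 \<le> l \<and> l < j"
  have lI: "l \<in> {1..n}" using l jI by auto
  have "\<sigma> l \<noteq> n" using sig_eq_n[OF lI] l by simp
  then have "\<sigma> l < n" using sig_range[OF lI] by simp
  then show "mat_mult n b w n l = 0" using mm_w[OF nI lI] Borel_D(2)[OF b] by simp
qed

definition Zc :: "cmat set" where
  "Zc = (\<Inter>k\<in>{i<..n}. {g. Dk n g k = 0}) \<inter> (\<Inter>l\<in>{1..<j}. {g. g n l = 0})"

lemma Zc_closed: "closed Zc"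
  unfolding Zc_def
  by (intro closed_Int closed_INT ballI closed_Collect_eq cont_Dk[OF n1] cont_entry continuous_on_const)

lemma condX_Zc: assumes g: "g \<in> GL n" shows "condX n i j g \<longleftrightarrow> g \<in> Zc"
proof -
  have "minv n g k 1 = 0 \<longleftrightarrow> Dk n g k = 0" if "k \<in> {i<..n}" for k
  proof -
    have "k \<in> {1..n}" using that iI by auto
    then show ?thesis using cramer_minv[OF g] det_GL[OF g] by (simp add: Dk_def)
  qed
  then show ?thesis unfolding condX_def Zc_def by auto
qed

lemma Xt_compl_open: "openin (top_of_set (GL n)) (GL n - {g \<in> GL n. condX n i j g})"
proof -
  have "GL n - {g \<in> GL n. condX n i j g} = GL n \<inter> (- Zc)" using condX_Zc by auto
  then show ?thesis using Zc_closed by (simp add: openin_open_Int open_Compl)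
qed

definition good :: "cmat \<Rightarrow> nat \<Rightarrow> bool" where
  "good g c \<longleftrightarrow> g (\<sigma> c) c \<noteq> 0 \<and> (\<forall>a. \<sigma> c < a \<and> a \<le> n \<longrightarrow> g a c = 0)"
definition clr :: "cmat \<Rightarrow> nat \<Rightarrow> bool" where
  "clr g c \<longleftrightarrow> (\<forall>c'. c < c' \<and> c' \<le> n \<longrightarrow> g (\<sigma> c) c' = 0)"
definition Nset :: "cmat \<Rightarrow> bool" where
  "Nset g \<longleftrightarrow> g \<in> GL n \<and> (\<forall>a\<in>{1..n}. g a i = ev 1 a) \<and> (\<forall>a\<in>{1..n}. g a j = ev n a) \<and> (\<forall>b\<in>{1..n}. g n b = ev j b)"
definition invk :: "nat \<Rightarrow> cmat \<Rightarrow> bool" where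
  "invk k g \<longleftrightarrow> Nset g \<and> (\<forall>c. 1 \<le> c \<and> c < k \<longrightarrow> good g c \<and> clr g c)"

lemma base: assumes "invk (Suc n) g" shows "g \<in> Sset n w"
proof -
  have N: "Nset g" and G: "\<And>c. c \<in> {1..n} \<Longrightarrow> good g c" using assms by (auto simp: invk_def)
  have gG: "g \<in> GL n" using N by (simp add: Nset_def)
  have wTG: "wT \<in> GL n" using GL_minv(1)[OF w_GL(1)] w_GL(2) by simp
  define b where "b = mat_mult n g wT"
  have bB: "b \<in> Borel n"
  proof (rule Borel_I)
    show "b \<in> GL n" unfolding b_def using gG wTG by (rule GL_mm)
    fix k l :: nat assume kl: "l < k"
    show "b k l = 0"
    proof (cases "k \<in> {1..n} \<and> l \<in> {1..n}")
      case True
      then obtain c where c: "c \<in> {1..n}" "\<sigma> c = l" using sig_onto by blast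
      have "b k l = g k c" unfolding b_def using mm_wT[of k c g] True c by simp
      also have "\<dots> = 0" using G[OF c(1)] kl c True by (auto simp: good_def)
      finally show ?thesis .
    qed (simp add: b_def mm_out)
  qed
  have "mat_mult n b w = g"
    unfolding b_def using GL_D[OF w_GL(1)] w_GL(2) GL_D(1)[OF gG] by (simp add: mm_assoc mm_idm_right)
  then have "mat_mult n (mat_mult n b w) (idm n) = g" using GL_D(1)[OF gG] by (simp add: mm_idm_right)
  then show ?thesis using Sset_BwB[OF w_GL(1) bB idm_Borel] by simp
qed

lemma deg:
  assumes I: "invk k g" and k: "k \<in> {1..n}" and a: "\<sigma> k < a" "a \<le> n"
  shows "g a k = 0"
proof -
  have N: "Nset g" using I by (simp add: invk_def)
  have aI: "a \<in> {1..n}" using a sig_range[OF k] by auto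
  show ?thesis
  proof (cases "k = i")
    case True then show ?thesis using N aI a by (auto simp: Nset_def ev_def)
  next
    case ki: False
    show ?thesis
    proof (cases "k = j")
      case True then show ?thesis using a by simp
    next
      case kj: False
      have rk: "rem k" using k ki kj by (simp add: rem_def)
      show ?thesis
      proof (cases "a = n")
        case True then show ?thesis using N k kj by (auto simp: Nset_def ev_def)
      next
        case an: False
        obtain c where c: "c \<in> {1..n}" "\<sigma> c = a" using sig_onto[OF aI] by blast
        have "c \<noteq> k" using c a by auto
        show ?thesis
        proof (cases "c < k")
          case True
          then have "clr g c" using I c by (auto simp: invk_def)
          then show ?thesis using True k c by (auto simp: clr_def)
        next
          case False
          then have ck: "k < c" using \<open>c \<noteq> k\<close> by simp
          have "c \<noteq> j" using sig_eq_n[OF c(1)] c an by simp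
          moreover have "c \<noteq> i" using sig_eq_1[OF c(1)] c a sig_rem_range[OF rk] by simp
          ultimately have "rem c" using c by (simp add: rem_def)
          then have "\<sigma> c < \<sigma> k" using sig_dec[OF rk _ ck] by simp
          then show ?thesis using c a by simp
        qed
      qed
    qed
  qed
qed

lemma step1:
  assumes k: "k \<in> {1..n}" and I: "invk k g" and nz: "g (\<sigma> k) k \<noteq> 0"
    and IH: "\<And>h. invk (Suc k) h \<Longrightarrow> h \<in> Sset n w"
  shows "g \<in> Sset n w"
proof -
  let ?d = "\<sigma> k"
  have N: "Nset g" using I by (simp add: invk_def)
  have gG: "g \<in> GL n" using N by (simp add: Nset_def)
  note gM = GL_D(1)[OF gG]
  define x where "x = (\<lambda>c'. if k < c' \<and> c' \<le> n then - g ?d c' / g ?d k else 0)"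
  have x0: "\<And>b. b \<notin> {1..n} \<Longrightarrow> x b = 0" "\<And>b. b \<le> k \<Longrightarrow> x b = 0" by (auto simp: x_def)
  define P where "P = rk1 n (\<lambda>a. 1 * ev k a) x"
  have dx: "dotp n x (\<lambda>a. 1 * ev k a) = 0" using dotp_ev2[OF k, where x=x and s=1] x0(2)[of k] by simp
  have PB: "P \<in> Borel n" unfolding P_def
    by (rule rk1_Borel) (use dx in \<open>auto simp: ev_def x_def\<close>)
  define g' where "g' = mat_mult n g P"
  have e: "g' a b = g a b + g a k * x b" for a b
    unfolding g'_def P_def using pert_entry[OF gM k x0(1), where s=1] by simp
  have g'G: "g' \<in> GL n" unfolding g'_def using gG Borel_D(1)[OF PB] by (rule GL_mm)
  have dI: "?d \<in> {1..n}" using sig_range[OF k] .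
  have xi: "x i = 0"
  proof (cases "k = i")
    case True then show ?thesis using x0(2) by simp
  next
    case False
    then have "?d \<noteq> 1" using sig_eq_1[OF k] by simp
    then have "g ?d i = 0" using N dI by (auto simp: Nset_def ev_def)
    then show ?thesis by (simp add: x_def)
  qed
  have xj: "x j = 0"
  proof (cases "k = j")
    case True then show ?thesis using x0(2) by simp
  next
    case False
    then have "?d \<noteq> n" using sig_eq_n[OF k] by simp
    then have "g ?d j = 0" using N dI by (auto simp: Nset_def ev_def)
    then show ?thesis by (simp add: x_def)
  qed
  have rown: "g n k * x b = 0" if "b \<in> {1..n}" for b
  proof (cases "k = j")
    case True
    then have "g ?d b = ev j b" using N that by (simp add: Nset_def)
    moreover have "g ?d k = 1" using N True jI by (simp add: Nset_def ev_def)
    ultimately show ?thesis using True by (auto simp: x_def ev_def)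
  next
    case False then have "g n k = 0" using N k by (simp add: Nset_def ev_def)
    then show ?thesis by simp
  qed
  have N': "Nset g'" unfolding Nset_def
    using g'G N xi xj rown by (auto simp: e Nset_def)
  have I': "invk (Suc k) g'" unfolding invk_def
  proof (rule conjI[OF N'], intro allI impI)
    fix c assume c: "1 \<le> c \<and> c < Suc k"
    show "good g' c \<and> clr g' c"
    proof (cases "c < k")
      case True
      have gc: "good g c" "clr g c" using I c True by (auto simp: invk_def)
      have colc: "g' a c = g a c" for a using x0(2)[of c] True by (simp add: e)
      have "g (\<sigma> c) k = 0" using gc(2) True k by (auto simp: clr_def)
      then have "clr g' c" using gc(2) by (auto simp: clr_def e)
      moreover have "good g' c" using gc(1) colc by (simp add: good_def)
      ultimately show ?thesis by simp
    next
      case False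
      then have ck: "c = k" using c by simp
      have colk: "g' a k = g a k" for a using x0(2)[of k] by (simp add: e)
      have "good g' k" using nz deg[OF I k] colk by (auto simp: good_def)
      moreover have "clr g' k" using nz by (auto simp: clr_def e x_def)
      ultimately show ?thesis using ck by simp
    qed
  qed
  have "g' \<in> Sset n w" using IH[OF I'] .
  then show ?thesis unfolding g'_def using Sset_right_back PB gG by blast
qed

lemma step2:
  assumes k: "k \<in> {1..n}" and I: "invk k g" and z: "g (\<sigma> k) k = 0"
    and IH: "\<And>h. invk (Suc k) h \<Longrightarrow> h \<in> Sset n w"
  shows "g \<in> Sset n w"
proof -
  let ?d = "\<sigma> k"
  have N: "Nset g" using I by (simp add: invk_def)
  have gG: "g \<in> GL n" using N by (simp add: Nset_def)
  note gM = GL_D(1)[OF gG]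
  have ki: "k \<noteq> i"
  proof
    assume "k = i" then have "g (\<sigma> k) k = 1" using N iI oneI by (simp add: Nset_def ev_def)
    with z show False by simp
  qed
  have kj: "k \<noteq> j"
  proof
    assume "k = j" then have "g (\<sigma> k) k = 1" using N jI by (simp add: Nset_def ev_def)
    with z show False by simp
  qed
  have dI: "?d \<in> {1..n}" using sig_range[OF k] .
  have d1: "?d \<noteq> 1" using sig_eq_1[OF k] ki by simp
  have dn: "?d \<noteq> n" using sig_eq_n[OF k] kj by simp
  have "\<exists>m. k < m \<and> m \<le> n \<and> g ?d m \<noteq> 0"
  proof (rule ccontr)
    assume H: "\<not> ?thesis"
    have "\<exists>a\<in>\<sigma> ` {1..k}. \<exists>b\<in>{k..n}. g a b \<noteq> 0"
    proof (rule GL_no_zero_block[OF gG])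
      show "\<sigma> ` {1..k} \<subseteq> {1..n}" using sig_range k by auto
      show "{k..n} \<subseteq> {1..n}" using k by auto
      show "n < card (\<sigma> ` {1..k}) + card {k..n}" using card_sig_img[of k] k by auto
    qed
    then obtain c b where cb: "c \<in> {1..k}" "b \<in> {k..n}" "g (\<sigma> c) b \<noteq> 0" by blast
    show False
    proof (cases "c < k")
      case True
      then have "clr g c" using I cb by (auto simp: invk_def)
      then have "g (\<sigma> c) b = 0" using True cb by (auto simp: clr_def)
      then show False using cb by simp
    next
      case False
      then have "c = k" using cb by simp
      then show False using H z cb by (cases "b = k") auto
    qed
  qed
  then obtain m where m: "k < m" "m \<le> n" "g ?d m \<noteq> 0" by blast
  have mI: "m \<in> {1..n}" using m k by auto
  have mi: "m \<noteq> i" using m N dI d1 by (auto simp: Nset_def ev_def)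
  have mj: "m \<noteq> j" using m N dI dn by (auto simp: Nset_def ev_def)
  have gnm: "g n m = 0" using N mI mj by (simp add: Nset_def ev_def)
  have x0: "\<And>b. b \<notin> {1..n} \<Longrightarrow> ev k b = 0" using k by (auto simp: ev_def)
  show ?thesis
  proof (rule Sset_pert[OF gG, where v = "ev m" and x = "ev k"])
    fix t :: real assume t: "t \<noteq> 0"
    define h where "h = mat_mult n g (rk1 n (\<lambda>a. complex_of_real t * ev m a) (ev k))"
    have e: "h a b = g a b + complex_of_real t * g a m * ev k b" for a b
      unfolding h_def by (rule pert_entry[OF gM mI x0])
    have dt: "1 + dotp n (ev k) (\<lambda>a. complex_of_real t * ev m a) \<noteq> 0"
      using dotp_ev[OF k] m by (simp add: ev_def)
    have hG: "h \<in> GL n" unfolding h_def using gG rk1_GL(1)[OF dt] by (rule GL_mm)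
    have N': "Nset h" unfolding Nset_def
      using hG N ki kj gnm by (auto simp: e Nset_def ev_def)
    have I': "invk k h" unfolding invk_def
    proof (rule conjI[OF N'], intro allI impI)
      fix c assume c: "1 \<le> c \<and> c < k"
      have gc: "good g c" "clr g c" using I c by (auto simp: invk_def)
      have colc: "h a c = g a c" for a using c by (simp add: e ev_def)
      have "g (\<sigma> c) m = 0" using gc(2) c m by (auto simp: clr_def)
      then have "clr h c" using gc(2) by (auto simp: clr_def e)
      moreover have "good h c" using gc(1) colc by (simp add: good_def)
      ultimately show "good h c \<and> clr h c" by simp
    qed
    have "h ?d k \<noteq> 0" using e z m t by (simp add: ev_def)
    then have "h \<in> Sset n w" by (rule step1[OF k I' _ IH])
    then show "mat_mult n g (rk1 n (\<lambda>a. complex_of_real t * ev m a) (ev k)) \<in> Sset n w"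
      by (simp add: h_def)
  qed
qed

lemma phase2: assumes "Nset g" shows "g \<in> Sset n w"
proof -
  have P: "d \<le> n \<Longrightarrow> \<forall>h. invk (Suc n - d) h \<longrightarrow> h \<in> Sset n w" for d
  proof (induction d)
    case 0 then show ?case using base by simp
  next
    case (Suc d)
    define k where "k = n - d"
    have k: "k \<in> {1..n}" using Suc.prems by (auto simp: k_def)
    have e1: "Suc n - Suc d = k" "Suc k = Suc n - d" using Suc.prems by (auto simp: k_def)
    have IH: "\<And>h. invk (Suc k) h \<Longrightarrow> h \<in> Sset n w" using Suc.IH Suc.prems e1 by auto
    show ?case unfolding e1(1)
    proof (intro allI impI)
      fix h assume I: "invk k h"
      show "h \<in> Sset n w"
      proof (cases "h (\<sigma> k) k = 0")
        case True then show ?thesis by (rule step2[OF k I _ IH])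
      next
        case False then show ?thesis by (rule step1[OF k I _ IH])
      qed
    qed
  qed
  have "invk 1 g" using assms by (simp add: invk_def)
  moreover have "Suc n - n = 1" by simp
  ultimately show ?thesis using P[of n] by (auto simp: One_nat_def)
qed

lemma P1E:
  assumes gG: "g \<in> GL n" and ci: "\<And>a. a \<in> {1..n} \<Longrightarrow> g a i = ev 1 a"
    and rn: "\<And>b. b \<in> {1..n} \<Longrightarrow> g n b = ev j b"
  shows "g \<in> Sset n w"
proof -
  define v where "v = (\<lambda>a. if a \<in> {1..n} \<and> a \<noteq> n then - g a j else 0)"
  define L where "L = rk1 n v (ev n)"
  have dv: "dotp n (ev n) v = 0" using dotp_ev[OF nI] by (simp add: v_def)
  have LB: "L \<in> Borel n" unfolding L_def
    by (rule rk1_Borel) (use dv in \<open>auto simp: ev_def\<close>)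
  define g' where "g' = mat_mult n L g"
  have e: "g' a b = g a b + v a * g n b" if "a \<in> {1..n}" "b \<in> {1..n}" for a b
  proof -
    have "g' a b = g a b + v a * (\<Sum>c=1..n. ev n c * g c b)" unfolding g'_def L_def using that by (rule rk1_left)
    also have "(\<Sum>c=1..n. ev n c * g c b) = g n b" using nI by (rule sum_ev_left)
    finally show ?thesis .
  qed
  have g'G: "g' \<in> GL n" unfolding g'_def using Borel_D(1)[OF LB] gG by (rule GL_mm)
  have gni: "g n i = 0" using rn[OF iI] ij by (simp add: ev_def)
  have gnj: "g n j = 1" using rn[OF jI] by (simp add: ev_def)
  have vn: "v n = 0" by (simp add: v_def)
  have "Nset g'" unfolding Nset_def
  proof (intro conjI g'G ballI)
    fix a assume a: "a \<in> {1..n}"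
    show "g' a i = ev 1 a" using e[OF a iI] gni ci[OF a] by simp
    show "g' a j = ev n a" using e[OF a jI] gnj a by (auto simp: v_def ev_def)
  next
    fix b assume b: "b \<in> {1..n}"
    show "g' n b = ev j b" using e[OF nI b] vn rn[OF b] by simp
  qed
  then have "g' \<in> Sset n w" by (rule phase2)
  then show ?thesis unfolding g'_def by (rule Sset_left_back[OF _ LB gG w_GL(1)])
qed

lemma P1D:
  assumes gG: "g \<in> GL n" and C: "condX n i j g" and ci: "\<And>a. a \<in> {1..n} \<Longrightarrow> g a i = ev 1 a"
    and rj: "g n j \<noteq> 0"
  shows "g \<in> Sset n w"
proof -
  note gM = GL_D(1)[OF gG]
  define x where "x = (\<lambda>b. if b = j then 1 / g n j - 1 else if j < b \<and> b \<le> n then - g n b / g n j else 0)"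
  define P where "P = rk1 n (\<lambda>a. 1 * ev j a) x"
  have x0: "\<And>b. b \<notin> {1..n} \<Longrightarrow> x b = 0" using jI by (auto simp: x_def)
  have dx: "1 + dotp n x (\<lambda>a. 1 * ev j a) \<noteq> 0"
  proof -
    have "dotp n x (\<lambda>a. 1 * ev j a) = 1 * x j" by (rule dotp_ev2[OF jI])
    then show ?thesis using rj by (simp add: x_def)
  qed
  have PB: "P \<in> Borel n" unfolding P_def
  proof (rule rk1_Borel[OF dx])
    fix a b :: nat assume "b < a"
    then show "1 * ev j a * x b = 0" by (auto simp: ev_def x_def)
  qed
  define g' where "g' = mat_mult n g P"
  have e: "g' a b = g a b + 1 * g a j * x b" for a b
    unfolding g'_def P_def by (rule pert_entry[OF gM jI x0])
  have g'G: "g' \<in> GL n" unfolding g'_def using gG Borel_D(1)[OF PB] by (rule GL_mm)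
  have gni: "g n i = 0" using ci[OF nI] n2 by (simp add: ev_def)
  have xi: "x i = 0" using gni ij by (simp add: x_def)
  have "g' \<in> Sset n w"
  proof (rule P1E[OF g'G])
    fix a assume "a \<in> {1..n}" then show "g' a i = ev 1 a" using e xi ci by simp
  next
    fix b assume b: "b \<in> {1..n}"
    show "g' n b = ev j b"
    proof (cases "b = j")
      case True then show ?thesis using rj by (simp add: e x_def ev_def field_simps)
    next
      case False
      show ?thesis
      proof (cases "j < b")
        case True then show ?thesis using rj b False by (simp add: e x_def ev_def)
      next
        case False': False
        then have "g n b = 0" using C b False by (auto simp: condX_def)
        then show ?thesis using False False' by (simp add: e x_def ev_def)
      qed
    qed
  qed
  then show ?thesis unfolding g'_def by (rule Sset_right_back[OF _ PB gG])
qed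

lemma P1C:
  assumes gG: "g \<in> GL n" and C: "condX n i j g" and ci: "\<And>a. a \<in> {1..n} \<Longrightarrow> g a i = ev 1 a"
  shows "g \<in> Sset n w"
proof (cases "g n j = 0")
  case False then show ?thesis using P1D[OF gG C ci] by simp
next
  case rj: True
  note gM = GL_D(1)[OF gG]
  obtain m where m: "m \<in> {1..n}" "g n m \<noteq> 0" using r_nz[OF gG n1] by blast
  have mj: "j < m"
  proof (rule ccontr)
    assume "\<not> j < m"
    then have "m < j \<or> m = j" by auto
    then show False using C m rj by (auto simp: condX_def)
  qed
  have x0: "\<And>b. b \<notin> {1..n} \<Longrightarrow> ev j b = 0" using jI by (auto simp: ev_def)
  show ?thesis
  proof (rule Sset_pert[OF gG, where v = "ev m" and x = "ev j"])
    fix t :: real assume t: "t \<noteq> 0"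
    define h where "h = mat_mult n g (rk1 n (\<lambda>a. complex_of_real t * ev m a) (ev j))"
    have e: "h a b = g a b + complex_of_real t * g a m * ev j b" for a b
      unfolding h_def by (rule pert_entry[OF gM m(1) x0])
    have dt: "1 + dotp n (ev j) (\<lambda>a. complex_of_real t * ev m a) \<noteq> 0"
      using dotp_ev[OF jI] mj by (simp add: ev_def)
    have hG: "h \<in> GL n" unfolding h_def using gG rk1_GL(1)[OF dt] by (rule GL_mm)
    have hi: "h a i = ev 1 a" if "a \<in> {1..n}" for a using ci[OF that] ij by (simp add: e ev_def)
    have "condX n i j h" unfolding condX_def
    proof (intro conjI allI impI)
      fix a assume a: "i < a \<and> a \<le> n"
      show "minv n h a 1 = 0"
        by (rule col_e1_minv[OF hG iI]) (use hi a iI in \<open>auto simp: ev_def\<close>)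
    next
      fix l assume l: "1 \<le> l \<and> l < j"
      then show "h n l = 0" using C by (simp add: e ev_def condX_def)
    qed
    moreover have "h n j \<noteq> 0" using rj m t by (simp add: e ev_def)
    ultimately have "h \<in> Sset n w" using P1D[OF hG _ hi] by blast
    then show "mat_mult n g (rk1 n (\<lambda>a. complex_of_real t * ev m a) (ev j)) \<in> Sset n w"
      by (simp add: h_def)
  qed
qed

lemma P1B:
  assumes gG: "g \<in> GL n" and C: "condX n i j g" and ui: "minv n g i 1 \<noteq> 0"
  shows "g \<in> Sset n w"
proof -
  note G = GL_D[OF gG]
  define v where "v = (\<lambda>a. if a \<in> {1..n} then minv n g a 1 - ev i a else 0)"
  define P where "P = rk1 n v (ev i)"
  have dv: "1 + dotp n (ev i) v \<noteq> 0" using dotp_ev[OF iI] ui iI by (simp add: v_def ev_def)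
  have PB: "P \<in> Borel n" unfolding P_def
  proof (rule rk1_Borel[OF dv])
    fix a b :: nat assume ab: "a \<in> {1..n}" "b \<in> {1..n}" "b < a"
    show "v a * ev i b = 0"
    proof (cases "b = i")
      case True
      then have "minv n g a 1 = 0" using C ab by (auto simp: condX_def)
      then show ?thesis using ab True by (simp add: v_def ev_def)
    qed (simp add: ev_def)
  qed
  define g' where "g' = mat_mult n g P"
  have g'G: "g' \<in> GL n" unfolding g'_def using gG Borel_D(1)[OF PB] by (rule GL_mm)
  have "g' a i = ev 1 a" if a: "a \<in> {1..n}" for a
  proof -
    have "g' a i = g a i + (\<Sum>c=1..n. g a c * v c) * ev i i" unfolding g'_def P_def using a iI by (rule rk1_right)
    also have "(\<Sum>c=1..n. g a c * v c) = (\<Sum>c=1..n. g a c * minv n g c 1 - g a c * ev i c)"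
      by (rule sum.cong) (auto simp: v_def algebra_simps)
    also have "\<dots> = (\<Sum>c=1..n. g a c * minv n g c 1) - (\<Sum>c=1..n. g a c * ev i c)"
      by (rule sum_subtractf)
    also have "(\<Sum>c=1..n. g a c * minv n g c 1) = mat_mult n g (minv n g) a 1" using a oneI by (simp add: mm_apply)
    also have "\<dots> = ev 1 a" using G(3) a by (simp add: idm_def ev_def)
    also have "(\<Sum>c=1..n. g a c * ev i c) = g a i" using iI by (rule sum_ev_right)
    finally show ?thesis by (simp add: ev_def)
  qed
  moreover have "condX n i j g'" unfolding g'_def by (rule condX_right_B[OF gG PB C])
  ultimately have "g' \<in> Sset n w" using P1C[OF g'G] by blast
  then show ?thesis unfolding g'_def by (rule Sset_right_back[OF _ PB gG])
qed

lemma P1A_pre: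
  assumes gG: "g \<in> GL n" and C: "condX n i j g" and ui: "minv n g i 1 = 0"
    and m: "m \<in> {1..n}" "m \<noteq> i" "minv n g m 1 \<noteq> 0"
    and vs: "\<And>a. v a \<noteq> 0 \<Longrightarrow> a \<in> {1..n} \<and> a \<le> i" and vi: "v i = 1" and vm: "v m = 0"
    and vr: "m < j \<Longrightarrow> (\<Sum>c=1..n. g n c * v c) = 0"
  shows "g \<in> Sset n w"
proof (rule Sset_pert[OF gG, where v = v and x = "ev m"])
  fix t :: real assume t: "t \<noteq> 0"
  define h where "h = mat_mult n g (rk1 n (\<lambda>a. complex_of_real t * v a) (ev m))"
  have d0: "dotp n (ev m) (\<lambda>a. complex_of_real t * v a) = 0" using dotp_ev[OF m(1)] vm by simp
  have hG: "h \<in> GL n" unfolding h_def using gG rk1_GL(1) d0 by (intro GL_mm) auto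
  have u': "minv n h a 1 = minv n g a 1 - complex_of_real t * v a * minv n g m 1" if a: "a \<in> {1..n}" for a
  proof -
    have "minv n h a 1 = minv n g a 1 - complex_of_real t * v a * (\<Sum>c=1..n. ev m c * minv n g c 1)"
      unfolding h_def using minv_pert[OF gG d0 a] by simp
    also have "(\<Sum>c=1..n. ev m c * minv n g c 1) = minv n g m 1" using m(1) by (rule sum_ev_left)
    finally show ?thesis .
  qed
  have r': "h n l = g n l + (\<Sum>c=1..n. g n c * (complex_of_real t * v c)) * ev m l" if l: "l \<in> {1..n}" for l
    unfolding h_def using nI l by (rule rk1_right)
  have "condX n i j h" unfolding condX_def
  proof (intro conjI allI impI)
    fix a assume a: "i < a \<and> a \<le> n"
    have aI: "a \<in> {1..n}" using a iI by auto
    have "v a = 0" using vs[of a] a by auto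
    moreover have "minv n g a 1 = 0" using C a by (simp add: condX_def)
    ultimately show "minv n h a 1 = 0" using u'[OF aI] by simp
  next
    fix l assume l: "1 \<le> l \<and> l < j"
    have lI: "l \<in> {1..n}" using l jI by auto
    have gl: "g n l = 0" using C l by (simp add: condX_def)
    show "h n l = 0"
    proof (cases "l = m")
      case True
      then have "(\<Sum>c=1..n. g n c * v c) = 0" using vr l by simp
      then have "(\<Sum>c=1..n. g n c * (complex_of_real t * v c)) = 0"
        by (simp add: sum_distrib_left[symmetric] algebra_simps)
      then show ?thesis using r'[OF lI] gl by simp
    next
      case False then show ?thesis using r'[OF lI] gl by (simp add: ev_def)
    qed
  qed
  moreover have "minv n h i 1 \<noteq> 0" using u'[OF iI] ui vi m t by simp
  ultimately have "h \<in> Sset n w" by (rule P1B[OF hG])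
  then show "mat_mult n g (rk1 n (\<lambda>a. complex_of_real t * v a) (ev m)) \<in> Sset n w" by (simp add: h_def)
qed

lemma P1A_mid:
  assumes gG: "g \<in> GL n" and C: "condX n i j g" and ui: "minv n g i 1 = 0"
    and m: "m \<in> {1..n}" "minv n g m 1 \<noteq> 0"
    and dis: "j \<le> m \<or> g n i = 0 \<or> (\<exists>p\<in>{1..n}. p < i \<and> g n p \<noteq> 0)"
  shows "g \<in> Sset n w"
proof -
  have mi: "m \<noteq> i" using m ui by auto
  show ?thesis
  proof (cases "j \<le> m \<or> g n i = 0")
    case True
    show ?thesis
    proof (rule P1A_pre[OF gG C ui m(1) mi m(2), where v = "ev i"])
      show "\<And>a. ev i a \<noteq> 0 \<Longrightarrow> a \<in> {1..n} \<and> a \<le> i" using iI by (auto simp: ev_def split: if_splits)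
      show "ev i i = 1" by (simp add: ev_def)
      show "ev i m = 0" using mi by (simp add: ev_def)
      assume "m < j"
      then have "g n i = 0" using True by simp
      then show "(\<Sum>c=1..n. g n c * ev i c) = 0" using sum_ev_right[OF iI] by simp
    qed
  next
    case False
    then obtain p where p: "p \<in> {1..n}" "p < i" "g n p \<noteq> 0" using dis by blast
    have jp: "j \<le> p" using C p by (auto simp: condX_def not_less[symmetric])
    have mj: "m < j" using False by simp
    define \<alpha> where "\<alpha> = g n i / g n p"
    show ?thesis
    proof (rule P1A_pre[OF gG C ui m(1) mi m(2), where v = "\<lambda>a. ev i a - \<alpha> * ev p a"])
      show "\<And>a. ev i a - \<alpha> * ev p a \<noteq> 0 \<Longrightarrow> a \<in> {1..n} \<and> a \<le> i" using iI p by (auto simp: ev_def split: if_splits)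
      show "ev i i - \<alpha> * ev p i = 1" using p by (simp add: ev_def)
      show "ev i m - \<alpha> * ev p m = 0" using mi mj jp by (simp add: ev_def)
      have "(\<Sum>c=1..n. g n c * (ev i c - \<alpha> * ev p c)) = (\<Sum>c=1..n. g n c * ev i c - (\<alpha> * g n c) * ev p c)"
        by (simp add: algebra_simps)
      also have "\<dots> = (\<Sum>c=1..n. g n c * ev i c) - (\<Sum>c=1..n. (\<alpha> * g n c) * ev p c)"
        by (rule sum_subtractf)
      also have "\<dots> = g n i - \<alpha> * g n p" using sum_ev_right[OF iI] sum_ev_right[OF p(1)] by simp
      also have "\<dots> = 0" using p by (simp add: \<alpha>_def)
      finally show "(\<Sum>c=1..n. g n c * (ev i c - \<alpha> * ev p c)) = 0" .
    qed
  qed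
qed

lemma P1A:
  assumes gG: "g \<in> GL n" and C: "condX n i j g"
  shows "g \<in> Sset n w"
proof (cases "minv n g i 1 = 0")
  case False then show ?thesis by (rule P1B[OF gG C])
next
  case ui: True
  note gM = GL_D(1)[OF gG]
  obtain m where m: "m \<in> {1..n}" "minv n g m 1 \<noteq> 0" using u_nz[OF gG n1] by blast
  show ?thesis
  proof (cases "j \<le> m \<or> g n i = 0 \<or> (\<exists>p\<in>{1..n}. p < i \<and> g n p \<noteq> 0)")
    case True then show ?thesis by (rule P1A_mid[OF gG C ui m])
  next
    case F: False
    show ?thesis
    proof (cases "minv n g j 1 = 0")
      case False then show ?thesis by (intro P1A_mid[OF gG C ui jI False]) simp
    next
      case uj: True
      have gi: "g n i \<noteq> 0" using F by simp
      have ji: "j < i"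
      proof (rule ccontr)
        assume "\<not> j < i" then have "i < j" using ij by simp
        then show False using C gi iI by (auto simp: condX_def)
      qed
      have gj: "g n j = 0" using F ji jI by auto
      have x0: "\<And>b. b \<notin> {1..n} \<Longrightarrow> ev j b = 0" using jI by (auto simp: ev_def)
      show ?thesis
      proof (rule Sset_pert[OF gG, where v = "ev i" and x = "ev j"])
        fix s :: real assume s: "s \<noteq> 0"
        define h where "h = mat_mult n g (rk1 n (\<lambda>a. complex_of_real s * ev i a) (ev j))"
        have d0: "dotp n (ev j) (\<lambda>a. complex_of_real s * ev i a) = 0" using dotp_ev[OF jI] ij by (simp add: ev_def)
        have hG: "h \<in> GL n" unfolding h_def using gG rk1_GL(1) d0 by (intro GL_mm) auto
        have u': "minv n h a 1 = minv n g a 1" if a: "a \<in> {1..n}" for a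
        proof -
          have "minv n h a 1 = minv n g a 1 - complex_of_real s * ev i a * (\<Sum>c=1..n. ev j c * minv n g c 1)"
            unfolding h_def using minv_pert[OF gG d0 a] by simp
          also have "(\<Sum>c=1..n. ev j c * minv n g c 1) = minv n g j 1" using jI by (rule sum_ev_left)
          finally show ?thesis using uj by simp
        qed
        have e: "h a b = g a b + complex_of_real s * g a i * ev j b" for a b
          unfolding h_def by (rule pert_entry[OF gM iI x0])
        have Ch: "condX n i j h" unfolding condX_def
        proof (intro conjI allI impI)
          fix a assume a: "i < a \<and> a \<le> n"
          then have "a \<in> {1..n}" using iI by auto
          then show "minv n h a 1 = 0" using u' C a by (simp add: condX_def)
        next
          fix l assume l: "1 \<le> l \<and> l < j"
          then show "h n l = 0" using C by (simp add: e ev_def condX_def)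
        qed
        have "h \<in> Sset n w"
        proof (rule P1A_mid[OF hG Ch _ m(1)])
          show "minv n h i 1 = 0" using u'[OF iI] ui by simp
          show "minv n h m 1 \<noteq> 0" using u'[OF m(1)] m by simp
          have "h n j \<noteq> 0" using gj gi s by (simp add: e ev_def)
          then show "j \<le> m \<or> h n i = 0 \<or> (\<exists>p\<in>{1..n}. p < i \<and> h n p \<noteq> 0)" using jI ji by blast
        qed
        then show "mat_mult n g (rk1 n (\<lambda>a. complex_of_real s * ev i a) (ev j)) \<in> Sset n w"
          by (simp add: h_def)
      qed
    qed
  qed
qed

end


theorem mainTheorem3:
  fixes n i j :: nat
  assumes "n \<ge> 2" and "i \<in> {1..n}" and "j \<in> {1..n}" and "i \<noteq> j"
  shows "XH n (Hsp n i j) = Schubert n (w_ij n i j)"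
proof -
  interpret F: flg n i j using assms by unfold_locales
  let ?w = "w_ij n i j"
  let ?Xt = "{g \<in> GL n. condX n i j g}"
  let ?O = "{flag_of n (mat_mult n b ?w) | b. b \<in> Borel n}"
  have XH: "XH n (Hsp n i j) = flag_of n ` ?Xt"
    unfolding XH_def by (auto simp: F.Xt_iff)
  have Sch: "Schubert n ?w = flag_top n closure_of ?O" by (simp add: Schubert_def)
  show ?thesis
  proof
    show "XH n (Hsp n i j) \<subseteq> Schubert n ?w"
    proof
      fix x assume "x \<in> XH n (Hsp n i j)"
      then obtain g where g: "g \<in> GL n" "condX n i j g" "x = flag_of n g" using XH by auto
      have gS: "g \<in> Sset n ?w" by (rule F.P1A[OF g(1,2)])
      show "x \<in> Schubert n ?w" unfolding Sch in_closure_of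
      proof (intro conjI allI impI)
        show "x \<in> topspace (flag_top n)" using g by (auto simp: topspace_flag FlagVar_def)
        fix T assume T: "x \<in> T \<and> openin (flag_top n) T"
        then have TF: "T \<subseteq> FlagVar n" and TO: "openin (top_of_set (GL n)) (\<Union>T)"
          by (auto simp: openin_flag)
        have "g \<in> \<Union>T" using T g flag_mem by blast
        then obtain b b' where bb: "b \<in> Borel n" "b' \<in> Borel n" "mat_mult n (mat_mult n b ?w) b' \<in> \<Union>T"
          using gS TO unfolding Sset_def by blast
        then obtain y where y: "y \<in> T" "mat_mult n (mat_mult n b ?w) b' \<in> y" by blast
        obtain g'' where g'': "g'' \<in> GL n" "y = flag_of n g''" using y TF by (auto simp: FlagVar_def)
        have "flag_of n (mat_mult n (mat_mult n b ?w) b') = y" using flag_eq(1)[OF g''(1)] y g'' by simp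
        moreover have "flag_of n (mat_mult n (mat_mult n b ?w) b') = flag_of n (mat_mult n b ?w)"
          by (rule flag_right[OF F.bw_GL[OF bb(1)] bb(2)])
        ultimately have "y \<in> ?O" using bb by auto
        then show "\<exists>y. y \<in> ?O \<and> y \<in> T" using y by blast
      qed
    qed
  next
    show "Schubert n ?w \<subseteq> XH n (Hsp n i j)"
    proof
      fix x assume x: "x \<in> Schubert n ?w"
      then have xt: "x \<in> FlagVar n" and cl: "\<And>T. x \<in> T \<Longrightarrow> openin (flag_top n) T \<Longrightarrow> (\<exists>y. y \<in> ?O \<and> y \<in> T)"
        unfolding Sch in_closure_of topspace_flag by auto
      obtain g where g: "g \<in> GL n" "x = flag_of n g" using xt by (auto simp: FlagVar_def)
      have "condX n i j g"
      proof (rule ccontr)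
        assume nc: "\<not> condX n i j g"
        define T where "T = flag_of n ` (GL n - ?Xt)"
        have UT: "\<Union>T = GL n - ?Xt"
        proof
          show "\<Union>T \<subseteq> GL n - ?Xt"
          proof
            fix h assume "h \<in> \<Union>T"
            then obtain g' where g': "g' \<in> GL n" "\<not> condX n i j g'" "h \<in> flag_of n g'" by (auto simp: T_def)
            then obtain b where b: "b \<in> Borel n" "h = mat_mult n g' b" by (auto simp: flag_of_def)
            have "h \<in> GL n" using flag_eq(2)[OF g'(1) g'(3)] .
            moreover have "\<not> condX n i j h" using F.condX_B_iff[OF g'(1) b(1)] g'(2) b(2) by simp
            ultimately show "h \<in> GL n - ?Xt" by simp
          qed
          show "GL n - ?Xt \<subseteq> \<Union>T" unfolding T_def using flag_mem by blast
        qed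
        have "T \<subseteq> FlagVar n" by (auto simp: T_def FlagVar_def)
        then have "openin (flag_top n) T" unfolding openin_flag UT using F.Xt_compl_open by simp
        moreover have "x \<in> T" using g nc by (auto simp: T_def)
        ultimately obtain y where y: "y \<in> ?O" "y \<in> T" using cl by blast
        then obtain b where b: "b \<in> Borel n" "y = flag_of n (mat_mult n b ?w)" by blast
        obtain g' where g': "g' \<in> GL n" "\<not> condX n i j g'" "y = flag_of n g'" using y(2) by (auto simp: T_def)
        have "g' \<in> flag_of n (mat_mult n b ?w)" using flag_mem[OF g'(1)] g'(3) b(2) by simp
        then obtain b' where b': "b' \<in> Borel n" "g' = mat_mult n (mat_mult n b ?w) b'" by (auto simp: flag_of_def)
        have "condX n i j g'" using F.condX_B_iff[OF F.bw_GL[OF b(1)] b'(1)] F.bw_cond[OF b(1)] b'(2) by simp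
        then show False using g'(2) by simp
      qed
      then show "x \<in> XH n (Hsp n i j)" using XH g by auto
    qed
  qed
qed

end
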